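(* Let $V_0$ be a type A $\mathcal U_q(gl(2))$-module with parameters $(N,\omega,\lambda_2)$ and $M'$ the associated induced module, and suppose $[\mu_2][N+\mu_2]=0$ (equivalently all $\mathcal C_p$ act as $0$ on $M'$). Then $M'$ has a maximal proper submodule $M''$, and $M=M'/M''$ is a simple $\mathcal U_q(sl(2|1))$-module with (i) $\dim M=2N-1$ if $[\mu_2]=0$ and $[N+\mu_2]\ne0$; (ii) $\dim M=2N+1$ if $[\mu_2]\ne0$ and $[N+\mu_2]=0$; (iii) $\dim M=2l'-1$ if $[\mu_2]=0$ and $[N+\mu_2]=0$ (which forces $N=l'$).
   Context: $q\in\mathbb C$ is a root of unity with $q^2\ne1$, $l$ the smallest positive integer with $q^l=1$, $l'=l$ if $l$ odd, $l'=l/2$ if $l$ even. $[x]=(q^x-q^{-x})/(q-q^{-1})$; for $\lambda_i\in\mathbb C^*$, $[\mu_i+a]$ means $(q^a\lambda_i-q^{-a}\lambda_i^{-1})/(q-q^{-1})$ (formally $q^{\mu_i}=\lambda_i$). $\mathcal U_q(sl(2|1))$ is the $\mathbb Z_2$-graded algebra generated by $k_1^{\pm1},k_2^{\pm1},e_1,e_2,f_1,f_2$ ($e_2,f_2$ odd) with relations $k_ik_i^{-1}=1$, $k_1k_2=k_2k_1$, $k_ie_jk_i^{-1}=q^{a_{ij}}e_j$, $k_if_jk_i^{-1}=q^{-a_{ij}}f_j$ ($a_{11}=2,a_{12}=a_{21}=-1,a_{22}=0$), $[e_1,f_1]=\frac{k_1-k_1^{-1}}{q-q^{-1}}$, $e_2f_2+f_2e_2=\frac{k_2-k_2^{-1}}{q-q^{-1}}$,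 $[e_1,f_2]=[e_2,f_1]=0$, $e_2^2=f_2^2=0$, $e_1^2e_2-(q+q^{-1})e_1e_2e_1+e_2e_1^2=0$, $f_1^2f_2-(q+q^{-1})f_1f_2f_1+f_2f_1^2=0$. $\mathcal U_q(gl(2))$ is the subalgebra generated by $e_1,f_1,k_1^{\pm1},k_2^{\pm1}$; $\mathcal U_q(\mathfrak g_+)$ the subalgebra generated by these and $e_2$. A type A $\mathcal U_q(gl(2))$-module with parameters $N\in\{1,\dots,l'\}$, $\omega\in\{\pm1\}$, $\lambda_2\in\mathbb C^*$ is $V_0$ with basis $v_0,\dots,v_{N-1}$, $\lambda_1=\omega q^{N-1}$, $k_1v_p=\lambda_1q^{-2p}v_p$, $k_2v_p=\lambda_2q^pv_p$, $f_1v_p=v_{p+1}$ ($p\le N-2$), $f_1v_{N-1}=0$, $e_1v_p=[p][\mu_1-p+1]v_{p-1}$. The induced module is $M'=\mathcal U_q(sl(2|1))\otimes_{\mathcal U_q(\mathfrak g_+)}V_0$ with $e_2V_0=0$. The $\mathcal C_p$ are the central elements $\mathcal C_p=k_1^{2p-1}k_2^{4p-2}(q-q^{-1})^2\{[h_1+h_2+1][h_2]-f_1e_1+f_2e_2([h_1+h_2]q^{1-2p}-[h_1+h_2+1])+f_3e_3([h_2-2]q^{1-2p}-[h_2-1])+(q-q^{-1})q^{-1-p}[p]f_3e_2e_1k_2+(q-q^{-1})q^{2-p}[p-1]f_1f_2e_3k_2^{-1}+(q-q^{-1})^2q^{1-2p}[p][p-1]f_2f_3e_3e_2\}$, where $e_3=e_1e_2-q^{-1}e_2e_1$,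 $f_3=f_2f_1-qf_1f_2$, $[h_2+a]=\frac{q^ak_2-q^{-a}k_2^{-1}}{q-q^{-1}}$, $[h_1+h_2+a]=\frac{q^ak_1k_2-q^{-a}k_1^{-1}k_2^{-1}}{q-q^{-1}}$. *)

theory Defs
  imports Complex_Main "Jordan_Normal_Form.Matrix"
begin

definition qpow :: "complex \<Rightarrow> int \<Rightarrow> complex" where
  "qpow q a = (if 0 \<le> a then q ^ nat a else inverse q ^ nat (- a))"

(* [mu + a] := (q^a lam - q^-a lam^-1)/(q - q^-1), where q^mu = lam.
   With lam = 1 this is the ordinary q-integer [a]. *)
definition qbr :: "complex \<Rightarrow> complex \<Rightarrow> int \<Rightarrow> complex" where
  "qbr q lam a = (qpow q a * lam - qpow q (- a) * inverse lam) / (q - inverse q)"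

definition ordq :: "complex \<Rightarrow> nat" where
  "ordq q = (LEAST n. 0 < n \<and> q ^ n = 1)"

definition lprime :: "complex \<Rightarrow> nat" where
  "lprime q = (if odd (ordq q) then ordq q else ordq q div 2)"

(* generators of U_q(sl(2|1)); K1i, K2i stand for k1^-1, k2^-1 *)
datatype gen = K1 | K1i | K2 | K2i | E1 | E2 | F1 | F2

definition gplus_gens :: "gen set" where
  "gplus_gens = {K1, K1i, K2, K2i, E1, F1, E2}"

definition cartan :: "nat \<Rightarrow> nat \<Rightarrow> int" where
  "cartan i j = (if i = 1 \<and> j = 1 then 2 else if i = 2 \<and> j = 2 then 0 else -1)"

definition is_rep :: "complex \<Rightarrow> nat \<Rightarrow> (gen \<Rightarrow> complex mat) \<Rightarrow> bool" where
  "is_rep q d r \<longleftrightarrow>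
     (\<forall>g. r g \<in> carrier_mat d d) \<and>
     r K1 * r K1i = 1\<^sub>m d \<and> r K1i * r K1 = 1\<^sub>m d \<and>
     r K2 * r K2i = 1\<^sub>m d \<and> r K2i * r K2 = 1\<^sub>m d \<and>
     r K1 * r K2 = r K2 * r K1 \<and>
     (\<forall>i\<in>{1::nat,2}. \<forall>j\<in>{1::nat,2}.
        (let Ki = (if i = 1 then r K1 else r K2);
             Kii = (if i = 1 then r K1i else r K2i);
             Ej = (if j = 1 then r E1 else r E2);
             Fj = (if j = 1 then r F1 else r F2) in
          Ki * Ej * Kii = qpow q (cartan i j) \<cdot>\<^sub>m Ej \<and>
          Ki * Fj * Kii = qpow q (- cartan i j) \<cdot>\<^sub>m Fj)) \<and>
     r E1 * r F1 - r F1 * r E1 = (1 / (q - inverse q)) \<cdot>\<^sub>m (r K1 - r K1i) \<and>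
     r E2 * r F2 + r F2 * r E2 = (1 / (q - inverse q)) \<cdot>\<^sub>m (r K2 - r K2i) \<and>
     r E1 * r F2 = r F2 * r E1 \<and>
     r E2 * r F1 = r F1 * r E2 \<and>
     r E2 * r E2 = 0\<^sub>m d d \<and> r F2 * r F2 = 0\<^sub>m d d \<and>
     r E1 * r E1 * r E2 - (q + inverse q) \<cdot>\<^sub>m (r E1 * r E2 * r E1) + r E2 * r E1 * r E1
        = 0\<^sub>m d d \<and>
     r F1 * r F1 * r F2 - (q + inverse q) \<cdot>\<^sub>m (r F1 * r F2 * r F1) + r F2 * r F1 * r F1
        = 0\<^sub>m d d"

(* The type A U_q(gl(2))-module V_0 with parameters (N, omega, lam2), regarded as a
   U_q(g_+)-module with e_2 acting by 0 (f_2 is not in g_+; its entry is irrelevant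
   and set to 0).  Column p of each matrix is the image of the basis vector v_p. *)
definition typeA :: "complex \<Rightarrow> nat \<Rightarrow> complex \<Rightarrow> complex \<Rightarrow> gen \<Rightarrow> complex mat" where
  "typeA q N \<omega> lam2 g =
     (let lam1 = \<omega> * q ^ (N - 1) in
      case g of
        K1  \<Rightarrow> mat N N (\<lambda>(i, j). if i = j then lam1 * qpow q (- 2 * int j) else 0)
      | K1i \<Rightarrow> mat N N (\<lambda>(i, j). if i = j then inverse (lam1 * qpow q (- 2 * int j)) else 0)
      | K2  \<Rightarrow> mat N N (\<lambda>(i, j). if i = j then lam2 * qpow q (int j) else 0)
      | K2i \<Rightarrow> mat N N (\<lambda>(i, j). if i = j then inverse (lam2 * qpow q (int j)) else 0)
      | F1  \<Rightarrow> mat N N (\<lambda>(i, j). if i = j + 1 then 1 else 0)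
      | E1  \<Rightarrow> mat N N (\<lambda>(i, j). if j = i + 1
                 then qbr q 1 (int j) * qbr q lam1 (1 - int j) else 0)
      | E2  \<Rightarrow> 0\<^sub>m N N
      | F2  \<Rightarrow> 0\<^sub>m N N)"

definition intertwiner ::
  "nat \<Rightarrow> (gen \<Rightarrow> complex mat) \<Rightarrow> nat \<Rightarrow> (gen \<Rightarrow> complex mat) \<Rightarrow> complex mat \<Rightarrow> bool" where
  "intertwiner d r d' r' T \<longleftrightarrow> T \<in> carrier_mat d' d \<and> (\<forall>g. T * r g = r' g * T)"

(* (d, r, iota) is the induced module U_q(sl(2|1)) (x)_{U_q(g_+)} V_0 (V_0 = C^N with the
   U_q(g_+)-action sigma), presented by its universal property: iota : V_0 -> C^d is a
   U_q(g_+)-module map, and every U_q(g_+)-module map from V_0 into a (finite-dimensional)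
   U_q(sl(2|1))-module factors uniquely through iota via a U_q(sl(2|1))-module map. *)
definition induced_module ::
  "complex \<Rightarrow> (gen \<Rightarrow> complex mat) \<Rightarrow> nat \<Rightarrow> nat \<Rightarrow> (gen \<Rightarrow> complex mat) \<Rightarrow> complex mat \<Rightarrow> bool" where
  "induced_module q \<sigma> N d r \<iota> \<longleftrightarrow>
     is_rep q d r \<and> \<iota> \<in> carrier_mat d N \<and>
     (\<forall>g\<in>gplus_gens. r g * \<iota> = \<iota> * \<sigma> g) \<and>
     (\<forall>d' r' \<iota>'. is_rep q d' r' \<and> \<iota>' \<in> carrier_mat d' N \<and>
        (\<forall>g\<in>gplus_gens. r' g * \<iota>' = \<iota>' * \<sigma> g) \<longrightarrow>
        (\<exists>!T. intertwiner d r d' r' T \<and> T * \<iota> = \<iota>'))"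

definition submodule :: "nat \<Rightarrow> (gen \<Rightarrow> complex mat) \<Rightarrow> complex vec set \<Rightarrow> bool" where
  "submodule d r W \<longleftrightarrow> W \<subseteq> carrier_vec d \<and> 0\<^sub>v d \<in> W \<and>
     (\<forall>u\<in>W. \<forall>v\<in>W. u + v \<in> W) \<and> (\<forall>c. \<forall>u\<in>W. c \<cdot>\<^sub>v u \<in> W) \<and>
     (\<forall>g. \<forall>u\<in>W. r g *\<^sub>v u \<in> W)"

definition maximal_proper_submodule :: "nat \<Rightarrow> (gen \<Rightarrow> complex mat) \<Rightarrow> complex vec set \<Rightarrow> bool" where
  "maximal_proper_submodule d r W \<longleftrightarrow> submodule d r W \<and> W \<noteq> carrier_vec d \<and>
     (\<forall>W'. submodule d r W' \<and> W \<subseteq> W' \<longrightarrow> W' = W \<or> W' = carrier_vec d)"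

definition simple_module :: "nat \<Rightarrow> (gen \<Rightarrow> complex mat) \<Rightarrow> bool" where
  "simple_module d r \<longleftrightarrow> 0 < d \<and>
     (\<forall>W. submodule d r W \<longrightarrow> W = {0\<^sub>v d} \<or> W = carrier_vec d)"

end

theory Submission
  imports Defs
begin


definition monr :: "nat \<Rightarrow> nat \<Rightarrow> (nat \<Rightarrow> nat) \<Rightarrow> (nat \<Rightarrow> complex) \<Rightarrow> complex mat" where
  "monr nr nc \<sigma> c = mat nr nc (\<lambda>(i, j). if i = \<sigma> j then c j else 0)"

lemma monr_carrier[simp]: "monr nr nc \<sigma> c \<in> carrier_mat nr nc"
  and monr_dim[simp]: "dim_row (monr nr nc \<sigma> c) = nr" "dim_col (monr nr nc \<sigma> c) = nc"
  by (auto simp: monr_def)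

lemma monr_index[simp]: "i < nr \<Longrightarrow> j < nc \<Longrightarrow> monr nr nc \<sigma> c $$ (i, j) = (if i = \<sigma> j then c j else 0)"
  by (simp add: monr_def)

lemma monr_mult: "monr a b \<sigma>1 c1 * monr b e \<sigma>2 c2 =
   monr a e (\<lambda>j. \<sigma>1 (\<sigma>2 j)) (\<lambda>j. if \<sigma>2 j < b then c1 (\<sigma>2 j) * c2 j else 0)"
proof (rule eq_matI)
  fix i j assume ij: "i < dim_row (monr a e (\<lambda>j. \<sigma>1 (\<sigma>2 j)) (\<lambda>j. if \<sigma>2 j < b then c1 (\<sigma>2 j) * c2 j else 0))"
     "j < dim_col (monr a e (\<lambda>j. \<sigma>1 (\<sigma>2 j)) (\<lambda>j. if \<sigma>2 j < b then c1 (\<sigma>2 j) * c2 j else 0))"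
  hence i: "i < a" and j: "j < e" by auto
  have "(monr a b \<sigma>1 c1 * monr b e \<sigma>2 c2) $$ (i, j) =
     (\<Sum>k\<in>{0..<b}. (if i = \<sigma>1 k then c1 k else 0) * (if k = \<sigma>2 j then c2 j else 0))"
    using i j by (simp add: scalar_prod_def)
  also have "\<dots> = (\<Sum>k\<in>{0..<b}. if k = \<sigma>2 j then (if i = \<sigma>1 k then c1 k else 0) * c2 j else 0)"
    by (rule sum.cong) auto
  also have "\<dots> = (if \<sigma>2 j < b then (if i = \<sigma>1 (\<sigma>2 j) then c1 (\<sigma>2 j) else 0) * c2 j else 0)"
    by (subst sum.delta) auto
  finally show "(monr a b \<sigma>1 c1 * monr b e \<sigma>2 c2) $$ (i, j) =
     monr a e (\<lambda>j. \<sigma>1 (\<sigma>2 j)) (\<lambda>j. if \<sigma>2 j < b then c1 (\<sigma>2 j) * c2 j else 0) $$ (i, j)"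
    using i j by auto
qed auto

lemma monr_mult_vec: "v \<in> carrier_vec nc \<Longrightarrow> i < nr \<Longrightarrow>
   (monr nr nc \<sigma> c *\<^sub>v v) $ i = (\<Sum>j\<in>{0..<nc}. if i = \<sigma> j then c j * v $ j else 0)"
  by (auto simp: monr_def scalar_prod_def intro!: sum.cong)

lemma monr_unit: "j < nc \<Longrightarrow> monr nr nc \<sigma> c *\<^sub>v unit_vec nc j =
   (if \<sigma> j < nr then c j \<cdot>\<^sub>v unit_vec nr (\<sigma> j) else 0\<^sub>v nr)"
proof (rule eq_vecI)
  fix i assume j: "j < nc" and i: "i < dim_vec (if \<sigma> j < nr then c j \<cdot>\<^sub>v unit_vec nr (\<sigma> j) else 0\<^sub>v nr)"
  hence i': "i < nr" by (auto split: if_splits)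
  have "(monr nr nc \<sigma> c *\<^sub>v unit_vec nc j) $ i = (\<Sum>k\<in>{0..<nc}. if i = \<sigma> k then c k * unit_vec nc j $ k else 0)"
    using i' by (intro monr_mult_vec) auto
  also have "\<dots> = (\<Sum>k\<in>{0..<nc}. if k = j then (if i = \<sigma> k then c k else 0) else 0)"
    by (rule sum.cong) (auto simp: unit_vec_def)
  also have "\<dots> = (if i = \<sigma> j then c j else 0)" using j by (subst sum.delta) auto
  finally show "(monr nr nc \<sigma> c *\<^sub>v unit_vec nc j) $ i = (if \<sigma> j < nr then c j \<cdot>\<^sub>v unit_vec nr (\<sigma> j) else 0\<^sub>v nr) $ i"
    using i' by auto
qed auto


lemma monr_cong: "(\<And>j. j < nc \<Longrightarrow> c j = c' j) \<Longrightarrow> (\<And>j. j < nc \<Longrightarrow> c j \<noteq> 0 \<Longrightarrow> \<sigma> j = \<tau> j)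
   \<Longrightarrow> monr nr nc \<sigma> c = monr nr nc \<tau> c'"
  by (rule eq_matI) (auto, metis)

lemma monr_add: "monr nr nc \<sigma> c1 + monr nr nc \<sigma> c2 = monr nr nc \<sigma> (\<lambda>j. c1 j + c2 j)"
  by (rule eq_matI) auto

lemma monr_diff: "monr nr nc \<sigma> c1 - monr nr nc \<sigma> c2 = monr nr nc \<sigma> (\<lambda>j. c1 j - c2 j)"
  by (rule eq_matI) auto

lemma monr_smult: "x \<cdot>\<^sub>m monr nr nc \<sigma> c = monr nr nc \<sigma> (\<lambda>j. x * c j)"
  by (rule eq_matI) auto

lemma monr_zero: "monr nr nc \<sigma> (\<lambda>j. 0) = 0\<^sub>m nr nc"
  by (rule eq_matI) auto

lemma monr_one: "monr n n (\<lambda>j. j) (\<lambda>j. 1) = 1\<^sub>m n"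
  by (rule eq_matI) auto

lemma monr_id: "monr nr nc id c = monr nr nc (\<lambda>j. j) c"
  by (simp add: id_def)

lemma monr_conj:
  assumes "\<And>j. j < n \<Longrightarrow> c j \<noteq> 0 \<Longrightarrow> \<sigma> j < n \<and> k (\<sigma> j) * c j * k' j = s * c j"
  shows "monr n n id k * monr n n \<sigma> c * monr n n id k' = s \<cdot>\<^sub>m monr n n \<sigma> c"
  unfolding monr_mult monr_smult id_def
  by (rule monr_cong) (use assms in \<open>auto simp: mult.assoc\<close>)

lemma monr_inv:
  assumes "\<And>j. j < n \<Longrightarrow> k j * k' j = 1"
  shows "monr n n id k * monr n n id k' = 1\<^sub>m n"
  unfolding monr_mult monr_one[symmetric] id_def
  by (rule monr_cong) (use assms in auto)

lemma monr_diag_comm: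
  "monr n n id k * monr n n id k' = monr n n id k' * monr n n id k"
  unfolding monr_mult id_def
  by (rule monr_cong) (auto simp: mult.commute)




lemma qpow_powi: "qpow q a = q powi a"
  by (simp add: qpow_def power_int_def)

lemma qbr_P: "q powi a = P \<Longrightarrow> qbr q lam a = (P * lam - inverse P * inverse lam) / (q - inverse q)"
  by (simp add: qbr_def qpow_powi power_int_minus)

lemma qbr_alt: "qbr q lam a = (q powi a * lam - inverse (q powi a) * inverse lam) / (q - inverse q)"
  by (simp add: qbr_def qpow_powi power_int_minus)

lemma qq_nz: "(q::complex) \<noteq> 0 \<Longrightarrow> q*q \<noteq> 1 \<Longrightarrow> q - inverse q \<noteq> 0"
proof
  assume "q \<noteq> 0" "q*q \<noteq> 1" "q - inverse q = 0"
  moreover have "q*q - 1 = q * (q - inverse q)" using \<open>q \<noteq> 0\<close> by (simp add: algebra_simps)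
  ultimately show False by simp
qed

lemma G1:
  fixes q lam :: complex and m :: int
  assumes q: "q \<noteq> 0" and lam: "lam \<noteq> 0" and qq1: "q*q \<noteq> 1"
  shows "qbr q 1 (m+1) * qbr q lam (-m) - qbr q 1 m * qbr q lam (1-m) = qbr q lam (-2*m)"
proof -
  have qq: "q - inverse q \<noteq> 0" by (rule qq_nz[OF q qq1])
  define X where "X = q powi m"
  have X: "X \<noteq> 0" using q by (simp add: X_def)
  have P1: "q powi (m+1) = X*q" using q by (simp add: X_def power_int_add)
  have P2: "q powi (-m) = inverse X" by (simp add: X_def power_int_minus)
  have P3: "q powi (1-m) = q * inverse X" using q by (simp add: X_def power_int_diff field_simps)
  have e: "-2*m = -m + -m" by simp
  have "q powi (-m + -m) = q powi (-m) * q powi (-m)" by (rule power_int_add) (simp add: q)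
  hence P4: "q powi (-2*m) = inverse X * inverse X" unfolding e[symmetric] P2 .
  have P5: "q powi m = X" by (simp add: X_def)
  note P = P1 P2 P3 P4 P5
  define E where "E = q*q - 1"
  have E: "E \<noteq> 0" using qq1 by (simp add: E_def)
  have D: "q - inverse q = E / q" using q by (simp add: E_def field_simps)
  show ?thesis unfolding qbr_P[OF P1] qbr_P[OF P2] qbr_P[OF P3] qbr_P[OF P4] qbr_P[OF P5] D
    using X q lam E by (simp add: field_simps; simp add: E_def algebra_simps)
qed

lemma G4:
  fixes q lam :: complex and a :: int
  assumes q: "q \<noteq> 0" and lam: "lam \<noteq> 0" and qq1: "q*q \<noteq> 1"
  shows "qbr q lam a - (q + inverse q) * qbr q lam (a+1) + qbr q lam (a+2) = 0"
proof -
  define X where "X = q powi a"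
  have X: "X \<noteq> 0" using q by (simp add: X_def)
  have P1: "q powi (a+1) = X*q" using q by (simp add: X_def power_int_add)
  have P2: "q powi (a+2) = X*q*q" using q by (simp add: X_def power_int_add power2_eq_square)
  have P3: "q powi a = X" by (simp add: X_def)
  define E where "E = q*q - 1"
  have E: "E \<noteq> 0" using qq1 by (simp add: E_def)
  have D: "q - inverse q = E / q" using q by (simp add: E_def field_simps)
  show ?thesis unfolding qbr_P[OF P1] qbr_P[OF P2] qbr_P[OF P3] D
    using X q lam E by (simp add: field_simps; simp add: E_def algebra_simps)
qed

lemma G2:
  fixes q lam mu :: complex and j :: int
  assumes q: "q \<noteq> 0" and lam: "lam \<noteq> 0" and mu: "mu \<noteq> 0" and qq1: "q*q \<noteq> 1"
  shows "qbr q (lam*q) (1-j) * qbr q mu j - qbr q mu (j-1) * qbr q lam (1-j) = qbr q (lam*mu) 1"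
proof -
  define X where "X = q powi j"
  have X: "X \<noteq> 0" using q by (simp add: X_def)
  have P1: "q powi (1-j) = q * inverse X" using q by (simp add: X_def power_int_diff field_simps)
  have P2: "q powi (j-1) = X * inverse q" using q by (simp add: X_def power_int_diff field_simps)
  have P3: "q powi j = X" by (simp add: X_def)
  have P4: "q powi 1 = q" by simp
  define E where "E = q*q - 1"
  have E: "E \<noteq> 0" using qq1 by (simp add: E_def)
  have D: "q - inverse q = E / q" using q by (simp add: E_def field_simps)
  show ?thesis unfolding qbr_P[OF P1] qbr_P[OF P2] qbr_P[OF P3] qbr_P[OF P4] D
    using X q lam mu E by (simp add: field_simps; simp add: E_def algebra_simps)
qed

lemma G6:
  fixes q mu :: complex and p :: int
  assumes q: "q \<noteq> 0" and mu: "mu \<noteq> 0" and qq1: "q*q \<noteq> 1"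
  shows "qbr q 1 (p-1) * qbr q mu p - qbr q 1 p * qbr q mu (p-1) = - qbr q mu 0"
proof -
  define X where "X = q powi p"
  have X: "X \<noteq> 0" using q by (simp add: X_def)
  have P2: "q powi (p-1) = X * inverse q" using q by (simp add: X_def power_int_diff field_simps)
  have P3: "q powi p = X" by (simp add: X_def)
  have P4: "q powi 0 = 1" by simp
  define E where "E = q*q - 1"
  have E: "E \<noteq> 0" using qq1 by (simp add: E_def)
  have D: "q - inverse q = E / q" using q by (simp add: E_def field_simps)
  show ?thesis unfolding qbr_P[OF P2] qbr_P[OF P3] qbr_P[OF P4] D
    using X q mu E by (simp add: field_simps; simp add: E_def algebra_simps)
qed

lemma qbr_shift1:
  fixes q lam :: complex
  assumes q: "q \<noteq> 0" shows "qbr q (lam * q) a = qbr q lam (a + 1)"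
proof -
  have P1: "q powi (a+1) = q powi a * q" using q by (simp add: power_int_add)
  show ?thesis unfolding qbr_P[OF refl, of q _ a] qbr_P[OF P1] using q
    by (simp add: field_simps)
qed

lemma qbr_shift2:
  fixes q lam :: complex
  assumes q: "q \<noteq> 0" shows "qbr q (lam * inverse q) a = qbr q lam (a - 1)"
proof -
  have P1: "q powi (a-1) = q powi a * inverse q" using q by (simp add: power_int_diff field_simps)
  show ?thesis unfolding qbr_P[OF refl, of q _ a] qbr_P[OF P1] using q
    by (simp add: field_simps)
qed

lemma G3:
  fixes q lam :: complex and m :: int
  assumes q: "q \<noteq> 0" and lam: "lam \<noteq> 0" and qq1: "q*q \<noteq> 1"
  shows "(qbr q 1 m * qbr q lam (1-m)) * (qbr q 1 (m-1) * qbr q lam (1-(m-1)))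
     - (q + inverse q) * ((qbr q 1 m * qbr q (lam*q) (1-m)) * (qbr q 1 (m-1) * qbr q lam (1-(m-1))))
     + (qbr q 1 m * qbr q (lam*q) (1-m)) * (qbr q 1 (m-1) * qbr q (lam*q) (1-(m-1))) = 0"
proof -
  have s: "qbr q (lam*q) (1-m) = qbr q lam (2-m)" "qbr q (lam*q) (1-(m-1)) = qbr q lam (3-m)"
    "qbr q lam (1-(m-1)) = qbr q lam (2-m)"
    using q by (auto simp: qbr_shift1 algebra_simps)
  have g: "qbr q lam (1-m) - (q + inverse q) * qbr q lam ((1-m)+1) + qbr q lam ((1-m)+2) = 0"
    by (rule G4[OF q lam qq1])
  have "qbr q lam ((1-m)+1) = qbr q lam (2-m)" "qbr q lam ((1-m)+2) = qbr q lam (3-m)" by (simp_all add: algebra_simps)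
  with g have g': "qbr q lam (1-m) - (q + inverse q) * qbr q lam (2-m) + qbr q lam (3-m) = 0" by simp
  have "qbr q 1 m * qbr q lam (1 - m) * (qbr q 1 (m - 1) * qbr q lam (2 - m)) -
      (q + inverse q) * (qbr q 1 m * qbr q lam (2 - m) * (qbr q 1 (m - 1) * qbr q lam (2 - m))) +
      qbr q 1 m * qbr q lam (2 - m) * (qbr q 1 (m - 1) * qbr q lam (3 - m))
      = qbr q 1 m * qbr q 1 (m-1) * qbr q lam (2-m) * (qbr q lam (1-m) - (q + inverse q) * qbr q lam (2-m) + qbr q lam (3-m))"
    by (simp add: algebra_simps)
  also have "\<dots> = 0" using g' by simp
  finally show ?thesis unfolding s .
qed

lemma G7:
  fixes q lam :: complex and m :: int
  assumes q: "q \<noteq> 0" and lam: "lam \<noteq> 0" and qq1: "q*q \<noteq> 1"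
  shows "(qbr q 1 (m+1) * qbr q lam (1-(m+1))) * (qbr q 1 m * qbr q lam (1-m))
     - (q + inverse q) * ((qbr q 1 m * qbr q (lam * inverse q) (1-m)) * (qbr q 1 m * qbr q lam (1-m)))
     + (qbr q 1 m * qbr q (lam * inverse q) (1-m)) * (qbr q 1 (m-1) * qbr q (lam * inverse q) (1-(m-1))) = 0"
proof -
  have s: "qbr q (lam * inverse q) (1-m) = qbr q lam (-m)" "qbr q (lam * inverse q) (1-(m-1)) = qbr q lam (1-m)"
    "qbr q lam (1-(m+1)) = qbr q lam (-m)"
    using q by (auto simp: qbr_shift2 algebra_simps)
  have g: "qbr q 1 (m-1) - (q + inverse q) * qbr q 1 ((m-1)+1) + qbr q 1 ((m-1)+2) = 0"
    by (rule G4[OF q _ qq1]) simp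
  have "qbr q 1 ((m-1)+1) = qbr q 1 m" "qbr q 1 ((m-1)+2) = qbr q 1 (m+1)" by (simp_all add: algebra_simps)
  with g have g': "qbr q 1 (m-1) - (q + inverse q) * qbr q 1 m + qbr q 1 (m+1) = 0" by simp
  have "qbr q 1 (m + 1) * qbr q lam (- m) * (qbr q 1 m * qbr q lam (1 - m)) -
    (q + inverse q) * (qbr q 1 m * qbr q lam (- m) * (qbr q 1 m * qbr q lam (1 - m))) +
    qbr q 1 m * qbr q lam (- m) * (qbr q 1 (m - 1) * qbr q lam (1 - m))
    = qbr q 1 m * qbr q lam (-m) * qbr q lam (1-m) * (qbr q 1 (m-1) - (q + inverse q) * qbr q 1 m + qbr q 1 (m+1))"
    by (simp add: algebra_simps)
  also have "\<dots> = 0" using g' by simp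
  finally show ?thesis unfolding s .
qed

lemma qbr_zero_iff:
  fixes q lam :: complex
  assumes q: "q \<noteq> 0" and lam: "lam \<noteq> 0" and qq1: "q*q \<noteq> 1"
  shows "qbr q lam a = 0 \<longleftrightarrow> (q powi a * lam)^2 = 1"
proof -
  have qq: "q - inverse q \<noteq> 0" by (rule qq_nz[OF q qq1])
  have X: "q powi a * lam \<noteq> 0" using q lam by simp
  have "qbr q lam a = 0 \<longleftrightarrow> q powi a * lam - inverse (q powi a * lam) = 0"
    unfolding qbr_alt using qq by (simp add: field_simps)
  also have "\<dots> \<longleftrightarrow> (q powi a * lam)^2 = 1" using X q
    by (simp add: field_simps power2_eq_square)
  finally show ?thesis .
qed

lemma qbr_diag:
  "(1 / (q - inverse q)) * (lam * qpow q a - inverse (lam * qpow q a)) = qbr q lam a"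
  by (simp add: qbr_def qpow_powi power_int_minus field_simps)




lemma sub_step:
  assumes sub: "submodule d r W" and u: "unit_vec d i \<in> W" and rg: "r g = monr d d \<sigma> c"
    and i: "i < d" and si: "\<sigma> i < d" and ci: "c i \<noteq> 0"
  shows "unit_vec d (\<sigma> i) \<in> W"
proof -
  have "r g *\<^sub>v unit_vec d i \<in> W" using sub u by (auto simp: submodule_def)
  hence "c i \<cdot>\<^sub>v unit_vec d (\<sigma> i) \<in> W" using i si by (simp add: rg monr_unit)
  hence "inverse (c i) \<cdot>\<^sub>v (c i \<cdot>\<^sub>v unit_vec d (\<sigma> i)) \<in> W" using sub by (auto simp: submodule_def)
  thus ?thesis using ci by (simp add: smult_smult_assoc)
qed

lemma sub_all:
  assumes sub: "submodule d r W" and u: "\<And>i. i < d \<Longrightarrow> unit_vec d i \<in> W"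
  shows "W = carrier_vec d"
proof
  show "W \<subseteq> carrier_vec d" using sub by (simp add: submodule_def)
  show "carrier_vec d \<subseteq> W"
  proof
    fix v :: "complex vec" assume v: "v \<in> carrier_vec d"
    have "\<forall>k\<le>d. vec d (\<lambda>i. if i < k then v $ i else 0) \<in> W"
    proof (intro allI impI)
      fix k assume "k \<le> d"
      thus "vec d (\<lambda>i. if i < k then v $ i else 0) \<in> W"
      proof (induction k)
        case 0
        have "vec d (\<lambda>i. if i < 0 then v $ i else 0) = 0\<^sub>v d" by (rule eq_vecI) auto
        thus ?case using sub by (simp add: submodule_def)
      next
        case (Suc k)
        have a: "vec d (\<lambda>i. if i < k then v $ i else 0) \<in> W" using Suc by simp
        have b: "v $ k \<cdot>\<^sub>v unit_vec d k \<in> W" using sub u Suc.prems by (auto simp: submodule_def)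
        have "vec d (\<lambda>i. if i < Suc k then v $ i else 0) = vec d (\<lambda>i. if i < k then v $ i else 0) + v $ k \<cdot>\<^sub>v unit_vec d k"
          by (rule eq_vecI) (auto simp: unit_vec_def less_Suc_eq)
        thus ?case using a b sub by (simp add: submodule_def)
      qed
    qed
    moreover have "vec d (\<lambda>i. if i < d then v $ i else 0) = v" using v by (intro eq_vecI) auto
    ultimately show "v \<in> W" by (metis order_refl)
  qed
qed

lemma sub_sep:
  assumes sub: "submodule d r W" and K1: "r K1 = monr d d id k1" and K2: "r K2 = monr d d id k2"
    and dist: "\<And>i i'. i < d \<Longrightarrow> i' < d \<Longrightarrow> i \<noteq> i' \<Longrightarrow> k1 i \<noteq> k1 i' \<or> k2 i \<noteq> k2 i'"
  shows "w \<in> W \<Longrightarrow> w \<noteq> 0\<^sub>v d \<Longrightarrow> \<exists>i<d. unit_vec d i \<in> W"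
proof (induction "card {i. i < d \<and> w $ i \<noteq> 0}" arbitrary: w rule: less_induct)
  case less
  have wc: "w \<in> carrier_vec d" using less.prems sub by (auto simp: submodule_def)
  define S where "S = {i. i < d \<and> w $ i \<noteq> 0}"
  have finS: "finite S" by (simp add: S_def)
  obtain i where i: "i \<in> S"
  proof -
    have "\<exists>i<d. w $ i \<noteq> 0"
    proof (rule ccontr)
      assume "\<not> (\<exists>i<d. w $ i \<noteq> 0)"
      hence "w = 0\<^sub>v d" using wc by (intro eq_vecI) auto
      thus False using less.prems by simp
    qed
    thus ?thesis using that by (auto simp: S_def)
  qed
  show ?case
  proof (cases "S = {i}")
    case True
    define c where "c = w $ i"
    have c0: "c \<noteq> 0" using i by (simp add: S_def c_def)
    have eq: "w = c \<cdot>\<^sub>v unit_vec d i"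
    proof (rule eq_vecI)
      fix k assume "k < dim_vec (c \<cdot>\<^sub>v unit_vec d i)"
      hence k: "k < d" by simp
      show "w $ k = (c \<cdot>\<^sub>v unit_vec d i) $ k"
      proof (cases "k = i")
        case False
        hence "k \<notin> S" using True by auto
        thus ?thesis using k False by (auto simp: S_def unit_vec_def)
      qed (use k in \<open>auto simp: unit_vec_def c_def\<close>)
    qed (use wc in auto)
    have "inverse c \<cdot>\<^sub>v w = unit_vec d i" using c0
      by (subst eq) (simp add: smult_smult_assoc)
    moreover have "inverse c \<cdot>\<^sub>v w \<in> W" using sub less.prems by (auto simp: submodule_def)
    ultimately show ?thesis using i by (auto simp: S_def)
  next
    case False
    then obtain i' where i': "i' \<in> S" "i' \<noteq> i" using i by blast
    have id: "i < d" "i' < d" using i i' by (auto simp: S_def)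
    obtain k where kk: "r K1 = monr d d id k \<or> r K2 = monr d d id k" and kne: "k i \<noteq> k i'"
      using dist[OF id(1) id(2)] i'(2) K1 K2 by metis
    define w' where "w' = r (if r K1 = monr d d id k then K1 else K2) *\<^sub>v w + (- k i) \<cdot>\<^sub>v w"
    have rk: "r (if r K1 = monr d d id k then K1 else K2) = monr d d id k" using kk by auto
    have w'W: "w' \<in> W" using sub less.prems by (auto simp: submodule_def w'_def)
    have w'i: "w' $ m = (k m - k i) * w $ m" if "m < d" for m
    proof -
      have "(monr d d id k *\<^sub>v w) $ m = (\<Sum>j\<in>{0..<d}. if m = j then k j * w $ j else 0)"
        using that wc by (subst monr_mult_vec) auto
      also have "\<dots> = k m * w $ m" using that by (subst sum.delta') auto
      finally show ?thesis using that wc unfolding w'_def rk by (simp add: algebra_simps)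
    qed
    have w'c: "w' \<in> carrier_vec d" using w'W sub by (auto simp: submodule_def)
    have sub': "{m. m < d \<and> w' $ m \<noteq> 0} \<subseteq> S - {i}" using w'i by (auto simp: S_def)
    have "card {m. m < d \<and> w' $ m \<noteq> 0} \<le> card (S - {i})" using sub' finS by (intro card_mono) auto
    also have "\<dots> < card S" by (rule card_Diff1_less[OF finS i])
    finally have lt: "card {m. m < d \<and> w' $ m \<noteq> 0} < card {i. i < d \<and> w $ i \<noteq> 0}" by (simp add: S_def)
    have "w' $ i' \<noteq> 0" using w'i[OF id(2)] i' kne by (auto simp: S_def)
    hence "w' \<noteq> 0\<^sub>v d" using id by auto
    thus ?thesis using less.hyps[OF lt w'W] by blast
  qed
qed




lemma ordq_props:
  assumes root: "\<exists>n>0. (q::complex) ^ n = 1"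
  shows "0 < ordq q" "q ^ ordq q = 1"
  using LeastI_ex[OF root] by (auto simp: ordq_def)

lemma ordq_dvd:
  assumes root: "\<exists>n>0. (q::complex) ^ n = 1" and qn: "q ^ n = 1"
  shows "ordq q dvd n"
proof -
  define l where "l = ordq q"
  have l: "0 < l" "q ^ l = 1" using ordq_props[OF root] by (auto simp: l_def)
  have e: "l * (n div l) + n mod l = n" by simp
  have "q ^ (l * (n div l) + n mod l) = (q ^ l) ^ (n div l) * q ^ (n mod l)"
    by (simp only: power_add power_mult)
  hence "q ^ n = (q ^ l) ^ (n div l) * q ^ (n mod l)" unfolding e .
  hence r: "q ^ (n mod l) = 1" using qn l by simp
  have "n mod l = 0"
  proof (rule ccontr)
    assume "n mod l \<noteq> 0"
    hence "ordq q \<le> n mod l" unfolding ordq_def using r by (intro Least_le) auto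
    hence "l \<le> n mod l" by (simp add: l_def)
    moreover have "n mod l < l" using l by simp
    ultimately show False by simp
  qed
  thus ?thesis by (simp add: l_def mod_eq_0_iff_dvd)
qed

lemma lprime_le:
  assumes root: "\<exists>n>0. (q::complex) ^ n = 1" and m: "0 < m" and qm: "q ^ (2 * m) = 1"
  shows "lprime q \<le> m"
proof -
  define l where "l = ordq q"
  have l: "0 < l" using ordq_props[OF root] by (auto simp: l_def)
  have dv: "l dvd 2 * m" using ordq_dvd[OF root qm] by (simp add: l_def)
  show ?thesis
  proof (cases "odd l")
    case True
    have "coprime l 2" using True by (simp add: coprime_commute)
    hence "l dvd m" using dv coprime_dvd_mult_right_iff by blast
    hence "l \<le> m" using m by (simp add: dvd_imp_le)
    thus ?thesis using True by (simp add: lprime_def l_def)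
  next
    case False
    then obtain k where k: "l = 2 * k" by auto
    hence "k dvd m" using dv by simp
    hence "k \<le> m" using m by (simp add: dvd_imp_le)
    thus ?thesis using False k by (simp add: lprime_def l_def)
  qed
qed

lemma lprime_pow:
  assumes root: "\<exists>n>0. (q::complex) ^ n = 1"
  shows "q ^ (2 * lprime q) = 1"
proof -
  have l: "q ^ ordq q = 1" using ordq_props[OF root] by auto
  show ?thesis
  proof (cases "odd (ordq q)")
    case True
    have "q ^ (2 * ordq q) = (q ^ ordq q) ^ 2" by (metis power_mult mult.commute)
    thus ?thesis using l True by (simp add: lprime_def)
  next
    case False thus ?thesis using l by (simp add: lprime_def)
  qed
qed

lemma q_nz: "\<exists>n>0. (q::complex) ^ n = 1 \<Longrightarrow> q \<noteq> 0"
  by (metis power_0_left zero_neq_one neq0_conv)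




lemma qpow_ratio: "(q::complex) \<noteq> 0 \<Longrightarrow> qpow q a * inverse (qpow q b) = qpow q (a - b)"
  by (simp add: qpow_powi power_int_diff field_simps)

lemma qbr00: "qbr q 1 0 = 0" by (simp add: qbr_def qpow_def)

lemma typeA_monr:
  "typeA q N \<omega> lam2 K1 = monr N N (\<lambda>j. j) (\<lambda>j. \<omega> * q ^ (N - 1) * qpow q (- 2 * int j))"
  "typeA q N \<omega> lam2 K1i = monr N N (\<lambda>j. j) (\<lambda>j. inverse (\<omega> * q ^ (N - 1) * qpow q (- 2 * int j)))"
  "typeA q N \<omega> lam2 K2 = monr N N (\<lambda>j. j) (\<lambda>j. lam2 * qpow q (int j))"
  "typeA q N \<omega> lam2 K2i = monr N N (\<lambda>j. j) (\<lambda>j. inverse (lam2 * qpow q (int j)))"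
  "typeA q N \<omega> lam2 F1 = monr N N Suc (\<lambda>j. 1)"
  "typeA q N \<omega> lam2 E2 = monr N N (\<lambda>j. j) (\<lambda>j. 0)"
  by (rule eq_matI; auto simp: typeA_def Let_def qbr00)+

lemma typeA_E1:
  "typeA q N \<omega> lam2 E1 = monr N N (\<lambda>j. j - 1) (\<lambda>j. qbr q 1 (int j) * qbr q (\<omega> * q ^ (N - 1)) (1 - int j))"
proof (rule eq_matI)
  fix i j assume ij: "i < dim_row (monr N N (\<lambda>j. j - 1) (\<lambda>j. qbr q 1 (int j) * qbr q (\<omega> * q ^ (N - 1)) (1 - int j)))"
    "j < dim_col (monr N N (\<lambda>j. j - 1) (\<lambda>j. qbr q 1 (int j) * qbr q (\<omega> * q ^ (N - 1)) (1 - int j)))"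
  show "typeA q N \<omega> lam2 E1 $$ (i, j) = monr N N (\<lambda>j. j - 1) (\<lambda>j. qbr q 1 (int j) * qbr q (\<omega> * q ^ (N - 1)) (1 - int j)) $$ (i, j)"
    using ij by (cases "j = 0") (auto simp: typeA_def Let_def qbr00)
qed (auto simp: typeA_def Let_def)

locale setB =
  fixes q \<omega> lam2 :: complex and N :: nat
  assumes q0: "q \<noteq> 0" and qq1: "q*q \<noteq> 1" and om: "\<omega> = 1 \<or> \<omega> = -1" and lam2: "lam2 \<noteq> 0"
    and N1: "1 \<le> N" and vanN: "qbr q lam2 (int N) = 0"
begin

abbreviation "lam1 \<equiv> \<omega> * q ^ (N - 1)"
abbreviation "d \<equiv> 2 * N + 1"

definition "cK1 i = (if i < N then \<omega> * q ^ (N - 1) * inverse q ^ (2 * i) else \<omega> * q ^ (N - 1) * q * inverse q ^ (2 * (i - N)))"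
definition "cK2 i = (if i < N then lam2 * q ^ i else lam2 * q ^ (i - N))"
definition "cE1 i = (if i < N then qbr q 1 (int i) * qbr q (\<omega> * q ^ (N - 1)) (1 - int i)
    else qbr q 1 (int (i - N)) * qbr q (\<omega> * q ^ (N - 1) * q) (1 - int (i - N)))"
definition "cF1 i = (if i < N then (if Suc i < N then 1 else 0) else (if i < 2 * N then 1 else (0::complex)))"
definition "cE2 i = (if N \<le> i \<and> i < 2 * N then 1 else (0::complex))"
definition "cF2 i = (if i < N then qbr q lam2 (int i) else 0)"

definition rB :: "gen \<Rightarrow> complex mat" where
  "rB g = (case g of
     K1 \<Rightarrow> monr d d id cK1
   | K1i \<Rightarrow> monr d d id (\<lambda>i. inverse (cK1 i))
   | K2 \<Rightarrow> monr d d id cK2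
   | K2i \<Rightarrow> monr d d id (\<lambda>i. inverse (cK2 i))
   | E1 \<Rightarrow> monr d d (\<lambda>i. i - 1) cE1
   | F1 \<Rightarrow> monr d d Suc cF1
   | E2 \<Rightarrow> monr d d (\<lambda>i. i - N) cE2
   | F2 \<Rightarrow> monr d d (\<lambda>i. i + N) cF2)"

lemma om0: "\<omega> \<noteq> 0" using om by auto
lemma lam1_0: "lam1 \<noteq> 0" using om0 q0 by simp
lemma cK1_0: "cK1 i \<noteq> 0" using om0 q0 by (simp add: cK1_def)
lemma cK2_0: "cK2 i \<noteq> 0" using lam2 q0 by (simp add: cK2_def)

lemma qbr10: "qbr q 1 0 = 0" by (simp add: qbr_def qpow_def)
lemma cE1_0: "cE1 0 = 0" using N1 by (simp add: cE1_def qbr10)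
lemma cE1_N: "cE1 N = 0" by (simp add: cE1_def qbr10)

lemma van1: "qbr q lam1 (1 - int N) = 0"
proof -
  have "(q powi (1 - int N) * lam1)^2 = 1"
  proof -
    have "q powi (1 - int N) * q ^ (N - 1) = 1" using q0 N1
      by (simp add: power_int_diff field_simps flip: power_Suc)
    thus ?thesis using om by (auto simp: power2_eq_square algebra_simps)
  qed
  thus ?thesis using qbr_zero_iff[OF q0 lam1_0 qq1] by simp
qed

lemma van2: "qbr q (lam1 * q) (- int N) = 0"
  using van1 qbr_shift1[OF q0, of lam1 "- int N"] by simp

lemma rB_carrier: "rB g \<in> carrier_mat d d" by (cases g) (simp_all add: rB_def)

lemma rel_K1K1i: "rB K1 * rB K1i = 1\<^sub>m d" "rB K1i * rB K1 = 1\<^sub>m d"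
  "rB K2 * rB K2i = 1\<^sub>m d" "rB K2i * rB K2 = 1\<^sub>m d"
  using cK1_0 cK2_0 by (auto simp: rB_def intro!: monr_inv)

lemma rel_K1K2: "rB K1 * rB K2 = rB K2 * rB K1"
  by (simp add: rB_def monr_diag_comm)

lemma cE1_nz: "cE1 j \<noteq> 0 \<Longrightarrow> (\<exists>k. j = Suc k \<and> Suc k < N) \<or> (\<exists>m. j = N + Suc m)"
proof -
  assume a: "cE1 j \<noteq> 0"
  have "j \<noteq> 0" "j \<noteq> N" using a cE1_0 cE1_N by metis+
  show ?thesis
  proof (cases "j < N")
    case True
    hence "j = Suc (j - 1) \<and> Suc (j - 1) < N" using \<open>j \<noteq> 0\<close> by simp
    thus ?thesis by blast
  next
    case False
    hence "j = N + Suc (j - N - 1)" using \<open>j \<noteq> N\<close> by simp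
    thus ?thesis by blast
  qed
qed

lemma rel_K1E1: "rB K1 * rB E1 * rB K1i = q^2 \<cdot>\<^sub>m rB E1"
  unfolding rB_def gen.case
proof (rule monr_conj)
  fix j assume j: "j < d" "cE1 j \<noteq> 0"
  from cE1_nz[OF j(2)] show "j - 1 < d \<and> cK1 (j - 1) * cE1 j * inverse (cK1 j) = q^2 * cE1 j"
    using j q0 om0 by (auto simp: cK1_def field_simps power2_eq_square)
qed

lemma rel_K2E1: "rB K2 * rB E1 * rB K2i = inverse q \<cdot>\<^sub>m rB E1"
  unfolding rB_def gen.case
proof (rule monr_conj)
  fix j assume j: "j < d" "cE1 j \<noteq> 0"
  from cE1_nz[OF j(2)] show "j - 1 < d \<and> cK2 (j - 1) * cE1 j * inverse (cK2 j) = inverse q * cE1 j"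
    using j q0 lam2 by (auto simp: cK2_def field_simps)
qed

lemma rel_K1E2: "rB K1 * rB E2 * rB K1i = inverse q \<cdot>\<^sub>m rB E2"
  unfolding rB_def gen.case
proof (rule monr_conj)
  fix j assume j: "j < d" "cE2 j \<noteq> 0"
  hence "\<exists>m. j = N + m \<and> m < N" by (auto simp: cE2_def split: if_splits intro: exI[of _ "j - N"])
  thus "j - N < d \<and> cK1 (j - N) * cE2 j * inverse (cK1 j) = inverse q * cE2 j"
    using j q0 om0 by (auto simp: cK1_def field_simps)
qed

lemma rel_K2E2: "rB K2 * rB E2 * rB K2i = 1 \<cdot>\<^sub>m rB E2"
  unfolding rB_def gen.case
proof (rule monr_conj)
  fix j assume j: "j < d" "cE2 j \<noteq> 0"
  hence "\<exists>m. j = N + m \<and> m < N" by (auto simp: cE2_def split: if_splits intro: exI[of _ "j - N"])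
  thus "j - N < d \<and> cK2 (j - N) * cE2 j * inverse (cK2 j) = 1 * cE2 j"
    using j q0 lam2 by (auto simp: cK2_def field_simps)
qed

lemma cF1_nz: "cF1 j \<noteq> 0 \<Longrightarrow> (Suc j < N) \<or> (\<exists>m. j = N + m \<and> m < N)"
  by (auto simp: cF1_def split: if_splits intro: exI[of _ "j - N"])

lemma rel_K1F1: "rB K1 * rB F1 * rB K1i = inverse q ^ 2 \<cdot>\<^sub>m rB F1"
  unfolding rB_def gen.case
proof (rule monr_conj)
  fix j assume j: "j < d" "cF1 j \<noteq> 0"
  from cF1_nz[OF j(2)] show "Suc j < d \<and> cK1 (Suc j) * cF1 j * inverse (cK1 j) = inverse q ^ 2 * cF1 j"
    using j q0 om0 by (auto simp: cK1_def field_simps Suc_diff_le power2_eq_square)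
qed

lemma rel_K2F1: "rB K2 * rB F1 * rB K2i = q \<cdot>\<^sub>m rB F1"
  unfolding rB_def gen.case
proof (rule monr_conj)
  fix j assume j: "j < d" "cF1 j \<noteq> 0"
  from cF1_nz[OF j(2)] show "Suc j < d \<and> cK2 (Suc j) * cF1 j * inverse (cK2 j) = q * cF1 j"
    using j q0 lam2 by (auto simp: cK2_def field_simps Suc_diff_le)
qed

lemma rel_K1F2: "rB K1 * rB F2 * rB K1i = q \<cdot>\<^sub>m rB F2"
  unfolding rB_def gen.case
proof (rule monr_conj)
  fix j assume j: "j < d" "cF2 j \<noteq> 0"
  hence "j < N" by (auto simp: cF2_def split: if_splits)
  thus "j + N < d \<and> cK1 (j + N) * cF2 j * inverse (cK1 j) = q * cF2 j"
    using j q0 om0 by (auto simp: cK1_def field_simps)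
qed

lemma rel_K2F2: "rB K2 * rB F2 * rB K2i = 1 \<cdot>\<^sub>m rB F2"
  unfolding rB_def gen.case
proof (rule monr_conj)
  fix j assume j: "j < d" "cF2 j \<noteq> 0"
  hence "j < N" by (auto simp: cF2_def split: if_splits)
  thus "j + N < d \<and> cK2 (j + N) * cF2 j * inverse (cK2 j) = 1 * cF2 j"
    using j q0 lam2 by (auto simp: cK2_def field_simps)
qed


lemma iq_qpow: "inverse q ^ n = qpow q (- int n)"
  by (cases "n = 0") (auto simp: qpow_def)

lemma diagK1: "j < N \<Longrightarrow> 1 / (q - inverse q) * (cK1 j - inverse (cK1 j)) = qbr q lam1 (- 2 * int j)"
  "\<not> j < N \<Longrightarrow> 1 / (q - inverse q) * (cK1 j - inverse (cK1 j)) = qbr q (lam1 * q) (- 2 * int (j - N))"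
  using qbr_diag[of q lam1 "- 2 * int j"] qbr_diag[of q "lam1 * q" "- 2 * int (j - N)"]
  by (auto simp: cK1_def iq_qpow)

lemma diagK2: "j < N \<Longrightarrow> 1 / (q - inverse q) * (cK2 j - inverse (cK2 j)) = qbr q lam2 (int j)"
  "1 / (q - inverse q) * (cK2 (N + m) - inverse (cK2 (N + m))) = qbr q lam2 (int m)"
  using qbr_diag[of q lam2 "int j"] qbr_diag[of q lam2 "int m"]
  by (auto simp: cK2_def qpow_def)

lemma coefE1F1:
  assumes j: "j < d"
  shows "(if Suc j < d then cE1 (Suc j) * cF1 j else 0) - cF1 (j - 1) * cE1 j
     = 1 / (q - inverse q) * (cK1 j - inverse (cK1 j))"
proof (cases "j < N")
  case True
  have 2: "cF1 (j - 1) * cE1 j = qbr q 1 (int j) * qbr q lam1 (1 - int j)"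
    using True by (cases j) (auto simp: cF1_def cE1_def qbr10)
  have g: "qbr q 1 (int j + 1) * qbr q lam1 (- int j) - qbr q 1 (int j) * qbr q lam1 (1 - int j) = qbr q lam1 (-2 * int j)"
    by (rule G1[OF q0 lam1_0 qq1])
  show ?thesis
  proof (cases "Suc j < N")
    case True
    have 1: "(if Suc j < d then cE1 (Suc j) * cF1 j else 0) = qbr q 1 (int j + 1) * qbr q lam1 (- int j)"
      using True by (simp add: cE1_def cF1_def algebra_simps)
    show ?thesis unfolding 1 2 diagK1(1)[OF \<open>j < N\<close>] g ..
  next
    case False
    hence jN: "int j = int N - 1" using \<open>j < N\<close> by simp
    have 1: "(if Suc j < d then cE1 (Suc j) * cF1 j else 0) = 0"
      using False \<open>j < N\<close> by (simp add: cF1_def)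
    have e: "- int j = 1 - int N" using jN by simp
    have "qbr q lam1 (- int j) = 0" unfolding e by (rule van1)
    with g show ?thesis unfolding 1 2 diagK1(1)[OF \<open>j < N\<close>] by simp
  qed
next
  case False
  define m where "m = j - N"
  have jm: "j = N + m" and m: "m \<le> N" using False j by (auto simp: m_def)
  have 2: "cF1 (j - 1) * cE1 j = qbr q 1 (int m) * qbr q (lam1 * q) (1 - int m)"
    using N1 m by (cases m) (auto simp: jm cF1_def cE1_def qbr10)
  have g: "qbr q 1 (int m + 1) * qbr q (lam1 * q) (- int m) - qbr q 1 (int m) * qbr q (lam1 * q) (1 - int m) = qbr q (lam1 * q) (-2 * int m)"
    by (rule G1[OF q0 _ qq1]) (use lam1_0 q0 in simp)
  show ?thesis
  proof (cases "m < N")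
    case True
    have 1: "(if Suc j < d then cE1 (Suc j) * cF1 j else 0) = qbr q 1 (int m + 1) * qbr q (lam1 * q) (- int m)"
      using True by (simp add: jm cE1_def cF1_def algebra_simps)
    show ?thesis unfolding 1 2 diagK1(2)[OF False] g by (simp add: m_def)
  next
    case False
    hence mN: "m = N" using m by simp
    have 1: "(if Suc j < d then cE1 (Suc j) * cF1 j else 0) = 0"
      using mN by (simp add: jm)
    have "qbr q (lam1 * q) (- int m) = 0" using van2 mN by simp
    with g show ?thesis unfolding 1 2 diagK1(2)[OF \<open>\<not> j < N\<close>] by (simp add: m_def)
  qed
qed

lemma rel_E1F1: "rB E1 * rB F1 - rB F1 * rB E1 = (1 / (q - inverse q)) \<cdot>\<^sub>m (rB K1 - rB K1i)"
proof -
  have a: "rB E1 * rB F1 = monr d d (\<lambda>j. j) (\<lambda>j. if Suc j < d then cE1 (Suc j) * cF1 j else 0)"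
    by (simp add: rB_def monr_mult)
  have b: "rB F1 * rB E1 = monr d d (\<lambda>j. j) (\<lambda>j. cF1 (j - 1) * cE1 j)"
    unfolding rB_def gen.case monr_mult
    by (rule monr_cong) (auto simp: cE1_0 split: if_splits, metis One_nat_def Suc_pred cE1_0 mult_zero_right neq0_conv)
  have c: "rB K1 - rB K1i = monr d d (\<lambda>j. j) (\<lambda>j. cK1 j - inverse (cK1 j))"
    by (simp add: rB_def monr_diff id_def)
  show ?thesis unfolding a b c monr_diff monr_smult
    apply (rule monr_cong)
     apply (rule coefE1F1, assumption)
    by simp
qed


lemma rel_E2F2: "rB E2 * rB F2 + rB F2 * rB E2 = (1 / (q - inverse q)) \<cdot>\<^sub>m (rB K2 - rB K2i)"
proof -
  have a: "rB E2 * rB F2 = monr d d (\<lambda>j. j) (\<lambda>j. cF2 j)"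
    unfolding rB_def gen.case monr_mult
    by (rule monr_cong) (auto simp: cE2_def cF2_def)
  have b: "rB F2 * rB E2 = monr d d (\<lambda>j. j) (\<lambda>j. if N \<le> j then cF2 (j - N) else 0)"
    unfolding rB_def gen.case monr_mult
    by (rule monr_cong) (auto simp: cE2_def cF2_def split: if_splits)
  have c: "rB K2 - rB K2i = monr d d (\<lambda>j. j) (\<lambda>j. cK2 j - inverse (cK2 j))"
    by (simp add: rB_def monr_diff id_def)
  have coef: "cF2 j + (if N \<le> j then cF2 (j - N) else 0) = 1 / (q - inverse q) * (cK2 j - inverse (cK2 j))"
    if j: "j < d" for j
  proof (cases "j < N")
    case True
    thus ?thesis using diagK2(1)[OF True] by (simp add: cF2_def)
  next
    case False
    define m where "m = j - N"
    have jm: "j = N + m" and m: "m \<le> N" using False j by (auto simp: m_def)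
    show ?thesis unfolding jm diagK2(2) using m vanN by (auto simp: cF2_def)
  qed
  show ?thesis unfolding a b c monr_add monr_smult
    apply (rule monr_cong)
     apply (rule coef, assumption)
    by simp
qed

lemma van12: "qbr q (lam1 * lam2) 1 = 0"
proof -
  have "(q powi (int N) * lam2)^2 = 1" using vanN qbr_zero_iff[OF q0 lam2 qq1] by simp
  moreover have "(q powi 1 * (lam1 * lam2))^2 = (q powi (int N) * lam2)^2"
  proof -
    have "q * q ^ (N - 1) = q ^ N" using N1 by (simp flip: power_Suc)
    hence "(q * (lam1 * lam2))^2 = \<omega>^2 * (q ^ N * lam2)^2" by (simp add: algebra_simps power2_eq_square)
    thus ?thesis using om by auto
  qed
  ultimately show ?thesis using qbr_zero_iff[OF q0 _ qq1, of "lam1 * lam2" 1] lam1_0 lam2 by simp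
qed

lemma rel_E1F2: "rB E1 * rB F2 = rB F2 * rB E1"
proof -
  have a: "rB E1 * rB F2 = monr d d (\<lambda>j. j + N - 1) (\<lambda>j. if j < N then cE1 (j + N) * cF2 j else 0)"
    unfolding rB_def gen.case monr_mult
    by (rule monr_cong) (auto simp: cF2_def)
  have b: "rB F2 * rB E1 = monr d d (\<lambda>j. j + N - 1) (\<lambda>j. if j < N then cF2 (j - 1) * cE1 j else 0)"
    unfolding rB_def gen.case monr_mult
  proof (rule monr_cong)
    fix j assume j: "j < d"
    show "(if j - 1 < d then cF2 (j - 1) * cE1 j else 0) = (if j < N then cF2 (j - 1) * cE1 j else 0)"
    proof (cases "j < N")
      case False
      show ?thesis
      proof (cases "j = N")
        case True thus ?thesis using cE1_N by simp
      next
        case False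
        hence "\<not> j - 1 < N" using \<open>\<not> j < N\<close> by simp
        thus ?thesis using \<open>\<not> j < N\<close> by (simp add: cF2_def)
      qed
    qed simp
    assume "(if j - 1 < d then cF2 (j - 1) * cE1 j else 0) \<noteq> 0"
    hence "j \<noteq> 0" by (cases "j = 0") (simp_all add: cE1_0)
    thus "j - 1 + N = j + N - 1" by simp
  qed
  have coef: "(if j < N then cE1 (j + N) * cF2 j else 0) = (if j < N then cF2 (j - 1) * cE1 j else 0)" for j
  proof (cases "j < N")
    case True
    show ?thesis
    proof (cases j)
      case 0 thus ?thesis using cE1_N cE1_0 by simp
    next
      case (Suc k)
      have g: "qbr q (lam1*q) (1 - int j) * qbr q lam2 (int j) - qbr q lam2 (int j - 1) * qbr q lam1 (1 - int j) = qbr q (lam1 * lam2) 1"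
        by (rule G2[OF q0 lam1_0 lam2 qq1])
      have "cE1 (j + N) * cF2 j = qbr q 1 (int j) * (qbr q (lam1*q) (1 - int j) * qbr q lam2 (int j))"
        using True by (simp add: cE1_def cF2_def)
      also have "\<dots> = qbr q 1 (int j) * (qbr q lam2 (int j - 1) * qbr q lam1 (1 - int j))"
        using g van12 by simp
      also have "\<dots> = cF2 (j - 1) * cE1 j" using True Suc by (simp add: cE1_def cF2_def)
      finally show ?thesis using True by simp
    qed
  qed simp
  show ?thesis unfolding a b using coef by simp
qed

lemma rel_E2F1: "rB E2 * rB F1 = rB F1 * rB E2"
proof -
  have a: "rB E2 * rB F1 = monr d d (\<lambda>j. Suc j - N) (\<lambda>j. if N \<le> j \<and> Suc (j - N) < N then 1 else 0)"
    unfolding rB_def gen.case monr_mult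
    by (rule monr_cong) (auto simp: cE2_def cF1_def)
  have b: "rB F1 * rB E2 = monr d d (\<lambda>j. Suc j - N) (\<lambda>j. if N \<le> j \<and> Suc (j - N) < N then 1 else 0)"
    unfolding rB_def gen.case monr_mult
    by (rule monr_cong) (auto simp: cE2_def cF1_def split: if_splits)
  show ?thesis unfolding a b ..
qed

lemma rel_E2E2: "rB E2 * rB E2 = 0\<^sub>m d d"
proof -
  have "rB E2 * rB E2 = monr d d (\<lambda>j. j - N - N) (\<lambda>j. 0)"
    unfolding rB_def gen.case monr_mult by (rule monr_cong) (simp_all add: cE2_def, linarith)
  thus ?thesis by (simp add: monr_zero)
qed

lemma rel_F2F2: "rB F2 * rB F2 = 0\<^sub>m d d"
proof -
  have "rB F2 * rB F2 = monr d d (\<lambda>j. j + N + N) (\<lambda>j. 0)"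
    unfolding rB_def gen.case monr_mult by (rule monr_cong) (simp_all add: cF2_def)
  thus ?thesis by (simp add: monr_zero)
qed


lemma coefSE:
  assumes j: "j < d"
  shows "(if N \<le> j \<and> j < 2*N then cE1 (j - N) * cE1 (j - N - 1) else 0)
    - (q + inverse q) * (if N < j then cE1 j * cE1 (j - N - 1) else 0)
    + (if N + 2 \<le> j then cE1 j * cE1 (j - 1) else 0) = 0"
proof (cases "N \<le> j")
  case False thus ?thesis by simp
next
  case True
  define m where "m = j - N"
  have jm: "j = N + m" and m: "m \<le> N" using True j by (auto simp: m_def)
  show ?thesis
  proof (cases m)
    case 0 thus ?thesis by (simp add: jm cE1_def qbr10)
  next
    case (Suc k)
    show ?thesis
    proof (cases k)
      case 0 thus ?thesis using \<open>m = Suc k\<close> N1 by (simp add: jm cE1_def qbr10)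
    next
      case (Suc k')
      have m2: "2 \<le> m" using \<open>m = Suc k\<close> Suc by simp
      have e1: "int (m - 1) = int m - 1" using m2 by simp
      have e2: "int (m - 1 - 1) = int m - 2" using m2 by simp
      have g: "(qbr q 1 (int m) * qbr q lam1 (1-int m)) * (qbr q 1 (int m-1) * qbr q lam1 (1-(int m-1)))
       - (q + inverse q) * ((qbr q 1 (int m) * qbr q (lam1*q) (1-int m)) * (qbr q 1 (int m-1) * qbr q lam1 (1-(int m-1))))
       + (qbr q 1 (int m) * qbr q (lam1*q) (1-int m)) * (qbr q 1 (int m-1) * qbr q (lam1*q) (1-(int m-1))) = 0"
        by (rule G3[OF q0 lam1_0 qq1])
      have A: "(if N \<le> j \<and> j < 2*N then cE1 (j - N) * cE1 (j - N - 1) else 0)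
         = (qbr q 1 (int m) * qbr q lam1 (1-int m)) * (qbr q 1 (int m-1) * qbr q lam1 (1-(int m-1)))"
      proof (cases "m < N")
        case True
        have "m - 1 < N" "m - 1 - 1 < N" using True by auto
        thus ?thesis using m2 True by (simp add: jm cE1_def e1)
      next
        case False
        hence "m = N" using m by simp
        thus ?thesis using van1 by (simp add: jm)
      qed
      have B: "(if N < j then cE1 j * cE1 (j - N - 1) else 0)
         = (qbr q 1 (int m) * qbr q (lam1*q) (1-int m)) * (qbr q 1 (int m-1) * qbr q lam1 (1-(int m-1)))"
      proof -
        have "m - 1 < N" using m m2 by auto
        thus ?thesis using m2 m by (simp add: jm cE1_def e1)
      qed
      have C: "(if N + 2 \<le> j then cE1 j * cE1 (j - 1) else 0)
         = (qbr q 1 (int m) * qbr q (lam1*q) (1-int m)) * (qbr q 1 (int m-1) * qbr q (lam1*q) (1-(int m-1)))"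
      proof -
        have "j - 1 = N + (m - 1)" "\<not> N + m - 1 < N" "\<not> N + m - Suc 0 < N" using m2 jm by auto
        thus ?thesis using m2 m by (simp add: jm cE1_def e1)
      qed
      show ?thesis unfolding A B C by (rule g)
    qed
  qed
qed

lemma rel_SE: "rB E1 * rB E1 * rB E2 - (q + inverse q) \<cdot>\<^sub>m (rB E1 * rB E2 * rB E1) + rB E2 * rB E1 * rB E1 = 0\<^sub>m d d"
proof -
  have a: "rB E1 * rB E1 * rB E2 = monr d d (\<lambda>j. j - (N + 2)) (\<lambda>j. if N \<le> j \<and> j < 2*N then cE1 (j - N) * cE1 (j - N - 1) else 0)"
    unfolding rB_def gen.case monr_mult
    by (rule monr_cong) (auto simp: cE2_def)
  have b: "rB E1 * rB E2 * rB E1 = monr d d (\<lambda>j. j - (N + 2)) (\<lambda>j. if N < j then cE1 j * cE1 (j - N - 1) else 0)"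
    unfolding rB_def gen.case monr_mult
    by (rule monr_cong) (auto simp: cE2_def)
  have c: "rB E2 * rB E1 * rB E1 = monr d d (\<lambda>j. j - (N + 2)) (\<lambda>j. if N + 2 \<le> j then cE1 j * cE1 (j - 1) else 0)"
    unfolding rB_def gen.case monr_mult
    by (rule monr_cong) (auto simp: cE2_def)
  show ?thesis unfolding a b c monr_smult monr_diff monr_add monr_zero[symmetric, of d d "\<lambda>j. j - (N + 2)"]
    apply (rule monr_cong)
     apply (rule coefSE, assumption)
    by simp
qed

lemma coefSF:
  "(if Suc j < N then cF2 j else 0) - (q + inverse q) * (if Suc j < N then cF2 (Suc j) else 0)
    + (if Suc (Suc j) < N then cF2 (Suc (Suc j)) else 0) = 0"
proof -
  have g: "qbr q lam2 (int j) - (q + inverse q) * qbr q lam2 (int j + 1) + qbr q lam2 (int j + 2) = 0"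
    by (rule G4[OF q0 lam2 qq1])
  show ?thesis
  proof (cases "Suc (Suc j) < N")
    case True thus ?thesis using g by (simp add: cF2_def algebra_simps)
  next
    case False
    show ?thesis
    proof (cases "Suc j < N")
      case True
      hence "Suc (Suc j) = N" using False by simp
      hence e: "int j + 2 = int N" by simp
      have "qbr q lam2 (int j + 2) = 0" unfolding e by (rule vanN)
      thus ?thesis using g True False by (simp add: cF2_def algebra_simps)
    qed (use False in simp)
  qed
qed

lemma rel_SF: "rB F1 * rB F1 * rB F2 - (q + inverse q) \<cdot>\<^sub>m (rB F1 * rB F2 * rB F1) + rB F2 * rB F1 * rB F1 = 0\<^sub>m d d"
proof -
  have a: "rB F1 * rB F1 * rB F2 = monr d d (\<lambda>j. j + N + 2) (\<lambda>j. if Suc j < N then cF2 j else 0)"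
    unfolding rB_def gen.case monr_mult
    by (rule monr_cong) (auto simp: cF1_def cF2_def)
  have b: "rB F1 * rB F2 * rB F1 = monr d d (\<lambda>j. j + N + 2) (\<lambda>j. if Suc j < N then cF2 (Suc j) else 0)"
    unfolding rB_def gen.case monr_mult
    by (rule monr_cong) (auto simp: cF1_def cF2_def)
  have c: "rB F2 * rB F1 * rB F1 = monr d d (\<lambda>j. j + N + 2) (\<lambda>j. if Suc (Suc j) < N then cF2 (Suc (Suc j)) else 0)"
    unfolding rB_def gen.case monr_mult
    by (rule monr_cong) (auto simp: cF1_def cF2_def)
  show ?thesis unfolding a b c monr_smult monr_diff monr_add monr_zero[symmetric, of d d "\<lambda>j. j + N + 2"]
    apply (rule monr_cong)
     apply (rule coefSF)
    by simp
qed


lemma is_rep_B: "is_rep q d rB"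
  unfolding is_rep_def
  using rB_carrier rel_K1K1i rel_K1K2 rel_K1E1 rel_K2E1 rel_K1E2 rel_K2E2 rel_K1F1 rel_K2F1 rel_K1F2 rel_K2F2
    rel_E1F1 rel_E2F2 rel_E1F2 rel_E2F1 rel_E2E2 rel_F2F2 rel_SE rel_SF
  by (simp add: Let_def cartan_def qpow_def)


definition "\<iota>B = monr d N (\<lambda>j. j) (\<lambda>j. 1)"

lemma iotaB: "\<iota>B \<in> carrier_mat d N" by (simp add: \<iota>B_def)

lemma intertwB: "g \<in> gplus_gens \<Longrightarrow> rB g * \<iota>B = \<iota>B * typeA q N \<omega> lam2 g"
  unfolding gplus_gens_def
  by (auto simp: rB_def \<iota>B_def typeA_monr typeA_E1 monr_mult cK1_def cK2_def cE1_def cF1_def cE2_def iq_qpow qpow_def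
      intro!: monr_cong)


context
  assumes H2: "\<And>m. 0 < m \<Longrightarrow> m \<le> N \<Longrightarrow> q ^ (2 * m) \<noteq> 1"
begin

lemma powdist: "a \<le> N \<Longrightarrow> b \<le> N \<Longrightarrow> q ^ a = q ^ b \<Longrightarrow> a = b"
proof -
  have *: "q ^ a \<noteq> q ^ b" if ab: "a < b" "b \<le> N" for a b
  proof
    assume e: "q ^ a = q ^ b"
    have "q ^ b = q ^ a * q ^ (b - a)" using ab by (simp flip: power_add)
    hence "q ^ (b - a) = 1" using e q0 by simp
    moreover have "q ^ (2 * (b - a)) = (q ^ (b - a))^2" by (simp only: mult.commute[of 2 "b - a"] power_mult)
    ultimately have "q ^ (2 * (b - a)) = 1" by simp
    thus False using H2[of "b - a"] ab by simp
  qed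
  assume "a \<le> N" "b \<le> N" "q ^ a = q ^ b"
  thus "a = b" using *[of a b] *[of b a] by (cases a b rule: linorder_cases) auto
qed

lemma q_ne1: "q \<noteq> 1" using qq1 by auto

lemma distB: "i < d \<Longrightarrow> i' < d \<Longrightarrow> i \<noteq> i' \<Longrightarrow> cK1 i \<noteq> cK1 i' \<or> cK2 i \<noteq> cK2 i'"
proof (rule ccontr)
  assume i: "i < d" "i' < d" "i \<noteq> i'" and c: "\<not> (cK1 i \<noteq> cK1 i' \<or> cK2 i \<noteq> cK2 i')"
  define pos where "pos k = (if k < N then k else k - N)" for k
  have p: "pos i \<le> N" "pos i' \<le> N" using i by (auto simp: pos_def)
  have k2: "cK2 k = lam2 * q ^ pos k" for k by (simp add: cK2_def pos_def)
  have "q ^ pos i = q ^ pos i'" using c lam2 by (simp add: k2)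
  hence pe: "pos i = pos i'" using powdist p by blast
  have iq0: "inverse q ^ k \<noteq> 0" for k using q0 by simp
  have "(i < N \<and> \<not> i' < N) \<or> (\<not> i < N \<and> i' < N)" using pe i(3) by (auto simp: pos_def split: if_splits)
  moreover have False if "i < N" "\<not> i' < N" "pos i = pos i'"
  proof -
    have "i' - N = i" using that by (simp add: pos_def)
    hence "lam1 * inverse q ^ (2 * i) = lam1 * q * inverse q ^ (2 * i)" using c that by (simp add: cK1_def)
    hence "(lam1 * inverse q ^ (2 * i)) * q = (lam1 * inverse q ^ (2 * i)) * 1" by (simp add: algebra_simps)
    moreover have "lam1 * inverse q ^ (2 * i) \<noteq> 0" using lam1_0 iq0 by simp
    ultimately have "q = 1" by (simp only: mult_cancel_left) simp
    thus False using q_ne1 by simp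
  qed
  moreover have False if "i' < N" "\<not> i < N" "pos i = pos i'"
  proof -
    have "i - N = i'" using that by (simp add: pos_def)
    hence "lam1 * inverse q ^ (2 * i') = lam1 * q * inverse q ^ (2 * i')" using c that by (simp add: cK1_def)
    hence "(lam1 * inverse q ^ (2 * i')) * q = (lam1 * inverse q ^ (2 * i')) * 1" by (simp add: algebra_simps)
    moreover have "lam1 * inverse q ^ (2 * i') \<noteq> 0" using lam1_0 iq0 by simp
    ultimately have "q = 1" by (simp only: mult_cancel_left) simp
    thus False using q_ne1 by simp
  qed
  ultimately show False using pe by blast
qed

lemma nzF2: "p < N \<Longrightarrow> cF2 p \<noteq> 0"
proof
  assume p: "p < N" and z: "cF2 p = 0"
  hence "qbr q lam2 (int p) = 0" by (simp add: cF2_def)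
  hence a: "(q ^ p * lam2)^2 = 1" using qbr_zero_iff[OF q0 lam2 qq1] by simp
  have b: "(q ^ N * lam2)^2 = 1" using vanN qbr_zero_iff[OF q0 lam2 qq1] by simp
  have "q ^ N = q ^ p * q ^ (N - p)" using p by (simp flip: power_add)
  hence "(q ^ p * lam2)^2 * (q ^ (N - p))^2 = 1" using b by (simp add: power_mult_distrib algebra_simps)
  hence "(q ^ (N - p))^2 = 1" using a by simp
  hence "q ^ (2 * (N - p)) = 1" by (simp add: power_mult mult.commute)
  thus False using H2[of "N - p"] p by simp
qed

lemma nzE1: "1 \<le> m \<Longrightarrow> m \<le> N \<Longrightarrow> cE1 (N + m) \<noteq> 0"
proof -
  assume m: "1 \<le> m" "m \<le> N"
  have a: "qbr q 1 (int m) \<noteq> 0"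
  proof
    assume "qbr q 1 (int m) = 0"
    hence "(q ^ m)^2 = 1" using qbr_zero_iff[OF q0 _ qq1, of 1] by simp
    hence "q ^ (2 * m) = 1" by (simp add: power_mult mult.commute)
    thus False using H2[of m] m by simp
  qed
  have b: "qbr q (lam1 * q) (1 - int m) \<noteq> 0"
  proof
    assume "qbr q (lam1 * q) (1 - int m) = 0"
    hence z: "(q powi (1 - int m) * (lam1 * q))^2 = 1" using qbr_zero_iff[OF q0 _ qq1, of "lam1 * q"] lam1_0 q0 by simp
    have e1: "q ^ (N - 1) * q = q ^ N" using N1 by (cases N) (simp_all add: power_Suc2)
    have e2: "q powi (1 - int m) * q ^ N = q ^ (N + 1 - m)"
    proof -
      have eq: "int (N + 1 - m) = 1 - int m + int N" using m by simp
      have "q powi (int (N + 1 - m)) = q powi (1 - int m) * q powi (int N)" unfolding eq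
        by (rule power_int_add) (simp add: q0)
      thus ?thesis by simp
    qed
    have "(q powi (1 - int m) * (lam1 * q))^2 = \<omega>^2 * (q powi (1 - int m) * (q ^ (N - 1) * q))^2"
      by (simp add: algebra_simps power2_eq_square)
    also have "\<dots> = (q ^ (N + 1 - m))^2" using om e1 e2 by auto
    finally have "(q ^ (N + 1 - m))^2 = 1" using z by simp
    moreover have "q ^ (2 * (N + 1 - m)) = (q ^ (N + 1 - m))^2" by (simp only: mult.commute[of 2] power_mult)
    ultimately have "q ^ (2 * (N + 1 - m)) = 1" by simp
    moreover have "0 < N + 1 - m" "N + 1 - m \<le> N" using m by auto
    ultimately show False using H2[of "N + 1 - m"] by blast
  qed
  show ?thesis using a b m by (simp add: cE1_def)
qed

lemma simpleB: "simple_module d rB"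
  unfolding simple_module_def
proof (intro conjI allI impI)
  show "0 < d" by simp
  fix W assume sub: "submodule d rB W"
  show "W = {0\<^sub>v d} \<or> W = carrier_vec d"
  proof (cases "\<exists>w\<in>W. w \<noteq> 0\<^sub>v d")
    case False
    hence "W = {0\<^sub>v d}" using sub by (auto simp: submodule_def)
    thus ?thesis ..
  next
    case True
    then obtain w where w: "w \<in> W" "w \<noteq> 0\<^sub>v d" by blast
    have K1: "rB K1 = monr d d id cK1" and K2: "rB K2 = monr d d id cK2" by (simp_all add: rB_def)
    obtain i where i: "i < d" "unit_vec d i \<in> W"
      using sub_sep[OF sub K1 K2 distB w] by blast
    have F2: "rB F2 = monr d d (\<lambda>i. i + N) cF2" and E1: "rB E1 = monr d d (\<lambda>i. i - 1) cE1"
      and F1: "rB F1 = monr d d Suc cF1" and E2: "rB E2 = monr d d (\<lambda>i. i - N) cE2"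
      by (simp_all add: rB_def)
    obtain m0 where m0: "m0 \<le> N" "unit_vec d (N + m0) \<in> W"
    proof (cases "i < N")
      case True
      have "unit_vec d (i + N) \<in> W" using sub_step[OF sub i(2) F2 i(1) _ nzF2[OF True]] True by simp
      thus ?thesis using that[of i] True by (simp add: add.commute)
    next
      case False
      thus ?thesis using that[of "i - N"] i by simp
    qed
    have down: "unit_vec d (N + (m0 - k)) \<in> W" for k
    proof (induction k)
      case 0 thus ?case using m0 by simp
    next
      case (Suc k)
      show ?case
      proof (cases "m0 - k = 0")
        case True thus ?thesis using Suc by simp
      next
        case False
        have "unit_vec d ((\<lambda>i. i - 1) (N + (m0 - k))) \<in> W"
          by (rule sub_step[OF sub Suc E1]) (use m0 False nzE1[of "m0 - k"] in auto)
        moreover have "N + (m0 - k) - 1 = N + (m0 - Suc k)" using False by simp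
        ultimately show ?thesis by simp
      qed
    qed
    have x0: "unit_vec d N \<in> W" using down[of m0] by simp
    have up: "m \<le> N \<Longrightarrow> unit_vec d (N + m) \<in> W" for m
    proof (induction m)
      case 0 thus ?case using x0 by simp
    next
      case (Suc m)
      have "unit_vec d (Suc (N + m)) \<in> W"
        by (rule sub_step[OF sub _ F1]) (use Suc in \<open>auto simp: cF1_def\<close>)
      thus ?case by simp
    qed
    have v: "m < N \<Longrightarrow> unit_vec d m \<in> W" for m
    proof -
      assume m: "m < N"
      have "unit_vec d ((\<lambda>i. i - N) (N + m)) \<in> W"
        by (rule sub_step[OF sub up[of m] E2]) (use m in \<open>auto simp: cE2_def\<close>)
      thus ?thesis by simp
    qed
    have "W = carrier_vec d"
    proof (rule sub_all[OF sub])
      fix k assume k: "k < d"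
      show "unit_vec d k \<in> W"
      proof (cases "k < N")
        case True thus ?thesis by (rule v)
      next
        case False
        hence "k = N + (k - N)" "k - N \<le> N" using k by auto
        thus ?thesis using up[of "k - N"] by simp
      qed
    qed
    thus ?thesis ..
  qed
qed

end

end



lemma powi_comb: "(q::complex) \<noteq> 0 \<Longrightarrow> a + int n = int k \<Longrightarrow> q powi a * q ^ n = q ^ k"
proof -
  assume q: "q \<noteq> 0" and e: "a + int n = int k"
  have "q powi (a + int n) = q powi a * q powi (int n)" by (rule power_int_add) (simp add: q)
  thus ?thesis using e by simp
qed

locale setA =
  fixes q \<omega> lam2 :: complex and N :: nat
  assumes q0: "q \<noteq> 0" and qq1: "q*q \<noteq> 1" and om: "\<omega> = 1 \<or> \<omega> = -1" and lam2: "lam2 \<noteq> 0"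
    and N1: "1 \<le> N" and van0: "qbr q lam2 0 = 0"
begin

abbreviation "lam1 \<equiv> \<omega> * q ^ (N - 1)"
abbreviation "d \<equiv> 2 * N - 1"

definition "cK1 i = (if i < N then \<omega> * q ^ (N - 1) * inverse q ^ (2 * i) else \<omega> * q ^ (N - 1) * inverse q * inverse q ^ (2 * (i - N)))"
definition "cK2 i = (if i < N then lam2 * q ^ i else lam2 * q * q ^ (i - N))"
definition "cE1 i = (if i < N then qbr q 1 (int i) * qbr q (\<omega> * q ^ (N - 1)) (1 - int i)
    else qbr q 1 (int (i - N)) * qbr q (\<omega> * q ^ (N - 1) * inverse q) (1 - int (i - N)))"
definition "cF1 i = (if i < N then (if Suc i < N then 1 else 0) else (if Suc i < 2 * N - 1 then 1 else (0::complex)))"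
definition "cE2 i = (if N \<le> i \<and> i < 2 * N - 1 then 1 else (0::complex))"
definition "cF2 i = (if i < N then qbr q lam2 (int i) else 0)"

definition rA :: "gen \<Rightarrow> complex mat" where
  "rA g = (case g of
     K1 \<Rightarrow> monr d d id cK1
   | K1i \<Rightarrow> monr d d id (\<lambda>i. inverse (cK1 i))
   | K2 \<Rightarrow> monr d d id cK2
   | K2i \<Rightarrow> monr d d id (\<lambda>i. inverse (cK2 i))
   | E1 \<Rightarrow> monr d d (\<lambda>i. i - 1) cE1
   | F1 \<Rightarrow> monr d d Suc cF1
   | E2 \<Rightarrow> monr d d (\<lambda>i. i + 1 - N) cE2
   | F2 \<Rightarrow> monr d d (\<lambda>i. i + N - 1) cF2)"

lemma om0: "\<omega> \<noteq> 0" using om by auto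
lemma lam1_0: "lam1 \<noteq> 0" using om0 q0 by simp
lemma lam1'_0: "lam1 * inverse q \<noteq> 0" using om0 q0 by simp
lemma cK1_0: "cK1 i \<noteq> 0" using om0 q0 by (simp add: cK1_def)
lemma cK2_0: "cK2 i \<noteq> 0" using lam2 q0 by (simp add: cK2_def)

lemma qbr10: "qbr q 1 0 = 0" by (simp add: qbr_def qpow_def)
lemma cE1_0: "cE1 0 = 0" using N1 by (simp add: cE1_def qbr10)
lemma cE1_N: "cE1 N = 0" by (simp add: cE1_def qbr10)
lemma cF2_0: "cF2 0 = 0" using N1 van0 by (simp add: cF2_def)

lemma van1: "qbr q lam1 (1 - int N) = 0"
proof -
  have "(q powi (1 - int N) * lam1)^2 = 1"
  proof -
    have "q powi (1 - int N) * q ^ (N - 1) = 1" using q0 N1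
      by (simp add: power_int_diff field_simps flip: power_Suc)
    thus ?thesis using om by (auto simp: power2_eq_square algebra_simps)
  qed
  thus ?thesis using qbr_zero_iff[OF q0 lam1_0 qq1] by simp
qed

lemma van2: "qbr q (lam1 * inverse q) (2 - int N) = 0"
  using van1 qbr_shift2[OF q0, of lam1 "2 - int N"] by (simp add: algebra_simps)

lemma rA_carrier: "rA g \<in> carrier_mat d d" by (cases g) (simp_all add: rA_def)

lemma rel_K1K1i: "rA K1 * rA K1i = 1\<^sub>m d" "rA K1i * rA K1 = 1\<^sub>m d"
  "rA K2 * rA K2i = 1\<^sub>m d" "rA K2i * rA K2 = 1\<^sub>m d"
  using cK1_0 cK2_0 by (auto simp: rA_def intro!: monr_inv)

lemma rel_K1K2: "rA K1 * rA K2 = rA K2 * rA K1"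
  by (simp add: rA_def monr_diag_comm)

lemma cE1_nz: "cE1 j \<noteq> 0 \<Longrightarrow> (\<exists>k. j = Suc k \<and> Suc k < N) \<or> (\<exists>m. j = N + Suc m)"
proof -
  assume a: "cE1 j \<noteq> 0"
  have "j \<noteq> 0" "j \<noteq> N" using a cE1_0 cE1_N by metis+
  show ?thesis
  proof (cases "j < N")
    case True
    hence "j = Suc (j - 1) \<and> Suc (j - 1) < N" using \<open>j \<noteq> 0\<close> by simp
    thus ?thesis by blast
  next
    case False
    hence "j = N + Suc (j - N - 1)" using \<open>j \<noteq> N\<close> by simp
    thus ?thesis by blast
  qed
qed

lemma rel_K1E1: "rA K1 * rA E1 * rA K1i = q^2 \<cdot>\<^sub>m rA E1"
  unfolding rA_def gen.case
proof (rule monr_conj)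
  fix j assume j: "j < d" "cE1 j \<noteq> 0"
  from cE1_nz[OF j(2)] show "j - 1 < d \<and> cK1 (j - 1) * cE1 j * inverse (cK1 j) = q^2 * cE1 j"
    using j q0 om0 by (auto simp: cK1_def field_simps power2_eq_square)
qed

lemma rel_K2E1: "rA K2 * rA E1 * rA K2i = inverse q \<cdot>\<^sub>m rA E1"
  unfolding rA_def gen.case
proof (rule monr_conj)
  fix j assume j: "j < d" "cE1 j \<noteq> 0"
  from cE1_nz[OF j(2)] show "j - 1 < d \<and> cK2 (j - 1) * cE1 j * inverse (cK2 j) = inverse q * cE1 j"
    using j q0 lam2 by (auto simp: cK2_def field_simps)
qed

lemma cE2_nz: "cE2 j \<noteq> 0 \<Longrightarrow> \<exists>m. j = N + m \<and> Suc m < N"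
  by (auto simp: cE2_def split: if_splits intro: exI[of _ "j - N"])

lemma rel_K1E2: "rA K1 * rA E2 * rA K1i = inverse q \<cdot>\<^sub>m rA E2"
  unfolding rA_def gen.case
proof (rule monr_conj)
  fix j assume j: "j < d" "cE2 j \<noteq> 0"
  from cE2_nz[OF j(2)] show "j + 1 - N < d \<and> cK1 (j + 1 - N) * cE2 j * inverse (cK1 j) = inverse q * cE2 j"
    using j q0 om0 by (auto simp: cK1_def field_simps power2_eq_square)
qed

lemma rel_K2E2: "rA K2 * rA E2 * rA K2i = 1 \<cdot>\<^sub>m rA E2"
  unfolding rA_def gen.case
proof (rule monr_conj)
  fix j assume j: "j < d" "cE2 j \<noteq> 0"
  from cE2_nz[OF j(2)] show "j + 1 - N < d \<and> cK2 (j + 1 - N) * cE2 j * inverse (cK2 j) = 1 * cE2 j"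
    using j q0 lam2 by (auto simp: cK2_def field_simps)
qed

lemma cF1_nz: "cF1 j \<noteq> 0 \<Longrightarrow> (Suc j < N) \<or> (\<exists>m. j = N + m \<and> Suc (Suc m) < N)"
  by (auto simp: cF1_def split: if_splits intro: exI[of _ "j - N"])

lemma rel_K1F1: "rA K1 * rA F1 * rA K1i = inverse q ^ 2 \<cdot>\<^sub>m rA F1"
  unfolding rA_def gen.case
proof (rule monr_conj)
  fix j assume j: "j < d" "cF1 j \<noteq> 0"
  from cF1_nz[OF j(2)] show "Suc j < d \<and> cK1 (Suc j) * cF1 j * inverse (cK1 j) = inverse q ^ 2 * cF1 j"
    using j q0 om0 by (auto simp: cK1_def field_simps Suc_diff_le power2_eq_square)
qed

lemma rel_K2F1: "rA K2 * rA F1 * rA K2i = q \<cdot>\<^sub>m rA F1"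
  unfolding rA_def gen.case
proof (rule monr_conj)
  fix j assume j: "j < d" "cF1 j \<noteq> 0"
  from cF1_nz[OF j(2)] show "Suc j < d \<and> cK2 (Suc j) * cF1 j * inverse (cK2 j) = q * cF1 j"
    using j q0 lam2 by (auto simp: cK2_def field_simps Suc_diff_le)
qed

lemma cF2_nz: "cF2 j \<noteq> 0 \<Longrightarrow> \<exists>k. j = Suc k \<and> Suc k < N"
  using cF2_0 by (cases j) (auto simp: cF2_def split: if_splits)

lemma rel_K1F2: "rA K1 * rA F2 * rA K1i = q \<cdot>\<^sub>m rA F2"
  unfolding rA_def gen.case
proof (rule monr_conj)
  fix j assume j: "j < d" "cF2 j \<noteq> 0"
  from cF2_nz[OF j(2)] show "j + N - 1 < d \<and> cK1 (j + N - 1) * cF2 j * inverse (cK1 j) = q * cF2 j"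
    using j q0 om0 by (auto simp: cK1_def field_simps power2_eq_square)
qed

lemma rel_K2F2: "rA K2 * rA F2 * rA K2i = 1 \<cdot>\<^sub>m rA F2"
  unfolding rA_def gen.case
proof (rule monr_conj)
  fix j assume j: "j < d" "cF2 j \<noteq> 0"
  from cF2_nz[OF j(2)] show "j + N - 1 < d \<and> cK2 (j + N - 1) * cF2 j * inverse (cK2 j) = 1 * cF2 j"
    using j q0 lam2 by (auto simp: cK2_def field_simps)
qed

lemma iq_qpow: "inverse q ^ n = qpow q (- int n)"
  by (cases "n = 0") (auto simp: qpow_def)

lemma diagK1: "j < N \<Longrightarrow> 1 / (q - inverse q) * (cK1 j - inverse (cK1 j)) = qbr q lam1 (- 2 * int j)"
  "\<not> j < N \<Longrightarrow> 1 / (q - inverse q) * (cK1 j - inverse (cK1 j)) = qbr q (lam1 * inverse q) (- 2 * int (j - N))"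
  using qbr_diag[of q lam1 "- 2 * int j"] qbr_diag[of q "lam1 * inverse q" "- 2 * int (j - N)"]
  by (auto simp: cK1_def iq_qpow mult.assoc)

lemma diagK2: "j < N \<Longrightarrow> 1 / (q - inverse q) * (cK2 j - inverse (cK2 j)) = qbr q lam2 (int j)"
  "1 / (q - inverse q) * (cK2 (N + m) - inverse (cK2 (N + m))) = qbr q lam2 (int m + 1)"
  using qbr_diag[of q lam2 "int j"] qbr_diag[of q "lam2 * q" "int m"] qbr_shift1[OF q0, of lam2 "int m"]
  by (auto simp: cK2_def qpow_def mult.assoc)


lemma coefE1F1:
  assumes j: "j < d"
  shows "(if Suc j < d then cE1 (Suc j) * cF1 j else 0) - cF1 (j - 1) * cE1 j
     = 1 / (q - inverse q) * (cK1 j - inverse (cK1 j))"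
proof (cases "j < N")
  case True
  have 2: "cF1 (j - 1) * cE1 j = qbr q 1 (int j) * qbr q lam1 (1 - int j)"
    using True by (cases j) (auto simp: cF1_def cE1_def qbr10)
  have g: "qbr q 1 (int j + 1) * qbr q lam1 (- int j) - qbr q 1 (int j) * qbr q lam1 (1 - int j) = qbr q lam1 (-2 * int j)"
    by (rule G1[OF q0 lam1_0 qq1])
  show ?thesis
  proof (cases "Suc j < N")
    case True
    have 1: "(if Suc j < d then cE1 (Suc j) * cF1 j else 0) = qbr q 1 (int j + 1) * qbr q lam1 (- int j)"
      using True by (simp add: cE1_def cF1_def algebra_simps)
    show ?thesis unfolding 1 2 diagK1(1)[OF \<open>j < N\<close>] g ..
  next
    case False
    hence jN: "int j = int N - 1" using \<open>j < N\<close> by simp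
    have 1: "(if Suc j < d then cE1 (Suc j) * cF1 j else 0) = 0"
      using False \<open>j < N\<close> by (simp add: cF1_def)
    have e: "- int j = 1 - int N" using jN by simp
    have "qbr q lam1 (- int j) = 0" unfolding e by (rule van1)
    with g show ?thesis unfolding 1 2 diagK1(1)[OF \<open>j < N\<close>] by simp
  qed
next
  case False
  define m where "m = j - N"
  have jm: "j = N + m" and m: "Suc m < N" using False j by (auto simp: m_def)
  have 2: "cF1 (j - 1) * cE1 j = qbr q 1 (int m) * qbr q (lam1 * inverse q) (1 - int m)"
    using N1 m by (cases m) (auto simp: jm cF1_def cE1_def qbr10)
  have g: "qbr q 1 (int m + 1) * qbr q (lam1 * inverse q) (- int m) - qbr q 1 (int m) * qbr q (lam1 * inverse q) (1 - int m) = qbr q (lam1 * inverse q) (-2 * int m)"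
    by (rule G1[OF q0 lam1'_0 qq1])
  show ?thesis
  proof (cases "Suc (Suc m) < N")
    case True
    have 1: "(if Suc j < d then cE1 (Suc j) * cF1 j else 0) = qbr q 1 (int m + 1) * qbr q (lam1 * inverse q) (- int m)"
      using True by (simp add: jm cE1_def cF1_def algebra_simps)
    show ?thesis unfolding 1 2 diagK1(2)[OF False] g by (simp add: m_def)
  next
    case False
    hence mN: "Suc (Suc m) = N" using m by simp
    have 1: "(if Suc j < d then cE1 (Suc j) * cF1 j else 0) = 0"
      using mN by (simp add: jm)
    have e: "- int m = 2 - int N" using mN by simp
    have "qbr q (lam1 * inverse q) (- int m) = 0" unfolding e by (rule van2)
    with g show ?thesis unfolding 1 2 diagK1(2)[OF \<open>\<not> j < N\<close>] by (simp add: m_def)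
  qed
qed

lemma rel_E1F1: "rA E1 * rA F1 - rA F1 * rA E1 = (1 / (q - inverse q)) \<cdot>\<^sub>m (rA K1 - rA K1i)"
proof -
  have a: "rA E1 * rA F1 = monr d d (\<lambda>j. j) (\<lambda>j. if Suc j < d then cE1 (Suc j) * cF1 j else 0)"
    by (simp add: rA_def monr_mult)
  have b: "rA F1 * rA E1 = monr d d (\<lambda>j. j) (\<lambda>j. cF1 (j - 1) * cE1 j)"
    unfolding rA_def gen.case monr_mult
  proof (rule monr_cong)
    fix j assume "j < d"
    thus "(if j - 1 < d then cF1 (j - 1) * cE1 j else 0) = cF1 (j - 1) * cE1 j" by simp
  next
    fix j assume "j < d" and h: "(if j - 1 < d then cF1 (j - 1) * cE1 j else 0) \<noteq> 0"
    have "cE1 j \<noteq> 0" using h by (auto split: if_splits)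
    hence "j \<noteq> 0" using cE1_0 by metis
    thus "Suc (j - 1) = j" by simp
  qed
  have c: "rA K1 - rA K1i = monr d d (\<lambda>j. j) (\<lambda>j. cK1 j - inverse (cK1 j))"
    by (simp add: rA_def monr_diff id_def)
  show ?thesis unfolding a b c monr_diff monr_smult
    apply (rule monr_cong)
     apply (rule coefE1F1, assumption)
    by simp
qed

lemma rel_E2F2: "rA E2 * rA F2 + rA F2 * rA E2 = (1 / (q - inverse q)) \<cdot>\<^sub>m (rA K2 - rA K2i)"
proof -
  have a: "rA E2 * rA F2 = monr d d (\<lambda>j. j) (\<lambda>j. cF2 j)"
    unfolding rA_def gen.case monr_mult
  proof (rule monr_cong)
    fix j assume j: "j < d"
    show "(if j + N - 1 < d then cE2 (j + N - 1) * cF2 j else 0) = cF2 j"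
    proof (cases "j < N")
      case True thus ?thesis using cF2_0 N1 by (cases j) (auto simp: cE2_def)
    qed (simp add: cF2_def)
  qed (use N1 in simp)
  have b: "rA F2 * rA E2 = monr d d (\<lambda>j. j) (\<lambda>j. if N \<le> j then cF2 (j + 1 - N) else 0)"
    unfolding rA_def gen.case monr_mult
    by (rule monr_cong) (auto simp: cE2_def cF2_def split: if_splits)
  have c: "rA K2 - rA K2i = monr d d (\<lambda>j. j) (\<lambda>j. cK2 j - inverse (cK2 j))"
    by (simp add: rA_def monr_diff id_def)
  have coef: "cF2 j + (if N \<le> j then cF2 (j + 1 - N) else 0) = 1 / (q - inverse q) * (cK2 j - inverse (cK2 j))"
    if j: "j < d" for j
  proof (cases "j < N")
    case True
    thus ?thesis using diagK2(1)[OF True] by (simp add: cF2_def)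
  next
    case False
    define m where "m = j - N"
    have jm: "j = N + m" and m: "Suc m < N" using False j by (auto simp: m_def)
    show ?thesis unfolding jm diagK2(2) using m by (auto simp: cF2_def algebra_simps)
  qed
  show ?thesis unfolding a b c monr_add monr_smult
    apply (rule monr_cong)
     apply (rule coef, assumption)
    by simp
qed


lemma coefE1F2: "2 \<le> j \<Longrightarrow> j < N \<Longrightarrow> cE1 (j + N - 1) * cF2 j = cF2 (j - 1) * cE1 j"
proof -
  assume j: "2 \<le> j" "j < N"
  have e: "int (j - 1) = int j - 1" using j by simp
  have s2: "qbr q (lam1 * inverse q) (2 - int j) = qbr q lam1 (1 - int j)"
    using qbr_shift2[OF q0, of lam1 "2 - int j"] by (simp add: algebra_simps)
  have i1: "\<not> j + N - 1 < N" "j + N - 1 - N = j - 1" "j + N - Suc 0 - N = j - 1" "\<not> j + N - Suc 0 < N" using j by auto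
  have g: "qbr q 1 (int j - 1) * qbr q lam2 (int j) - qbr q 1 (int j) * qbr q lam2 (int j - 1) = - qbr q lam2 0"
    by (rule G6[OF q0 lam2 qq1])
  hence g': "qbr q 1 (int j - 1) * qbr q lam2 (int j) = qbr q 1 (int j) * qbr q lam2 (int j - 1)" using van0 by simp
  have "cE1 (j + N - 1) * cF2 j = qbr q 1 (int j - 1) * qbr q lam2 (int j) * qbr q lam1 (1 - int j)"
    using j i1 s2 by (simp add: cE1_def cF2_def e)
  also have "\<dots> = cF2 (j - 1) * cE1 j" using j by (simp add: g' cE1_def cF2_def e)
  finally show ?thesis .
qed

lemma rel_E1F2: "rA E1 * rA F2 = rA F2 * rA E1"
proof -
  have a: "rA E1 * rA F2 = monr d d (\<lambda>j. j + N - 2) (\<lambda>j. if 2 \<le> j \<and> j < N then cF2 (j - 1) * cE1 j else 0)"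
    unfolding rA_def gen.case monr_mult
  proof (rule monr_cong)
    fix j assume j: "j < d"
    show "(if j + N - 1 < d then cE1 (j + N - 1) * cF2 j else 0) = (if 2 \<le> j \<and> j < N then cF2 (j - 1) * cE1 j else 0)"
    proof (cases "2 \<le> j \<and> j < N")
      case True
      hence "j + N - 1 < d" by auto
      thus ?thesis using coefE1F2[of j] True by simp
    next
      case False
      hence "j = 0 \<or> j = 1 \<or> N \<le> j" by auto
      thus ?thesis using False cF2_0 cE1_N by (auto simp: cF2_def)
    qed
  next
    fix j assume "j < d"
    show "j + N - 1 - 1 = j + N - 2" by simp
  qed
  have b: "rA F2 * rA E1 = monr d d (\<lambda>j. j + N - 2) (\<lambda>j. if 2 \<le> j \<and> j < N then cF2 (j - 1) * cE1 j else 0)"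
    unfolding rA_def gen.case monr_mult
  proof (rule monr_cong)
    fix j assume j: "j < d"
    show "(if j - 1 < d then cF2 (j - 1) * cE1 j else 0) = (if 2 \<le> j \<and> j < N then cF2 (j - 1) * cE1 j else 0)"
    proof (cases "2 \<le> j \<and> j < N")
      case True thus ?thesis using j by simp
    next
      case False
      hence "j = 0 \<or> j = 1 \<or> j = N \<or> N < j" by auto
      thus ?thesis using False cF2_0 cE1_N cE1_0 by (auto simp: cF2_def)
    qed
  next
    fix j assume "j < d" and h: "(if j - 1 < d then cF2 (j - 1) * cE1 j else 0) \<noteq> 0"
    have "cE1 j \<noteq> 0" using h by (auto split: if_splits)
    hence "j \<noteq> 0" using cE1_0 by metis
    thus "j - 1 + N - 1 = j + N - 2" by simp
  qed
  show ?thesis unfolding a b ..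
qed

lemma rel_E2F1: "rA E2 * rA F1 = rA F1 * rA E2"
proof -
  have a: "rA E2 * rA F1 = monr d d (\<lambda>j. j + 2 - N) (\<lambda>j. if N \<le> j \<and> Suc (Suc (j - N)) < N then 1 else 0)"
    unfolding rA_def gen.case monr_mult
    by (rule monr_cong) (auto simp: cE2_def cF1_def split: if_splits)
  have b: "rA F1 * rA E2 = monr d d (\<lambda>j. j + 2 - N) (\<lambda>j. if N \<le> j \<and> Suc (Suc (j - N)) < N then 1 else 0)"
    unfolding rA_def gen.case monr_mult
    by (rule monr_cong) (auto simp: cE2_def cF1_def split: if_splits)
  show ?thesis unfolding a b ..
qed

lemma rel_E2E2: "rA E2 * rA E2 = 0\<^sub>m d d"
proof -
  have "rA E2 * rA E2 = monr d d (\<lambda>j. j + 1 - N + 1 - N) (\<lambda>j. 0)"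
    unfolding rA_def gen.case monr_mult
  proof (rule monr_cong)
    fix j assume "j < d"
    show "(if j + 1 - N < d then cE2 (j + 1 - N) * cE2 j else 0) = 0"
    proof (cases "N \<le> j \<and> j < 2 * N - 1")
      case True
      hence "\<not> N \<le> j + 1 - N" by auto
      thus ?thesis by (simp add: cE2_def)
    qed (simp add: cE2_def)
  qed simp
  thus ?thesis by (simp add: monr_zero)
qed

lemma rel_F2F2: "rA F2 * rA F2 = 0\<^sub>m d d"
proof -
  have "rA F2 * rA F2 = monr d d (\<lambda>j. j + N - 1 + N - 1) (\<lambda>j. 0)"
    unfolding rA_def gen.case monr_mult
  proof (rule monr_cong)
    fix j assume "j < d"
    show "(if j + N - 1 < d then cF2 (j + N - 1) * cF2 j else 0) = 0"
      using cF2_0 by (cases j) (auto simp: cF2_def)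
  qed simp
  thus ?thesis by (simp add: monr_zero)
qed


lemma coefSE:
  assumes j: "j < d"
  shows "(if N \<le> j then cE1 (j + 1 - N) * cE1 (j - N) else 0)
    - (q + inverse q) * (if N < j then cE1 j * cE1 (j - N) else 0)
    + (if N + 2 \<le> j then cE1 j * cE1 (j - 1) else 0) = 0"
proof (cases "N \<le> j")
  case False thus ?thesis by simp
next
  case True
  define m where "m = j - N"
  have jm: "j = N + m" and m: "Suc m < N" using True j by (auto simp: m_def)
  show ?thesis
  proof (cases m)
    case 0 thus ?thesis by (simp add: jm cE1_def qbr10)
  next
    case (Suc k)
    have m1: "1 \<le> m" using Suc by simp
    have g: "(qbr q 1 (int m+1) * qbr q lam1 (1-(int m+1))) * (qbr q 1 (int m) * qbr q lam1 (1-int m))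
     - (q + inverse q) * ((qbr q 1 (int m) * qbr q (lam1 * inverse q) (1-int m)) * (qbr q 1 (int m) * qbr q lam1 (1-int m)))
     + (qbr q 1 (int m) * qbr q (lam1 * inverse q) (1-int m)) * (qbr q 1 (int m-1) * qbr q (lam1 * inverse q) (1-(int m-1))) = 0"
      by (rule G7[OF q0 lam1_0 qq1])
    have A: "(if N \<le> j then cE1 (j + 1 - N) * cE1 (j - N) else 0)
       = (qbr q 1 (int m+1) * qbr q lam1 (1-(int m+1))) * (qbr q 1 (int m) * qbr q lam1 (1-int m))"
    proof -
      have "j + 1 - N = Suc m" "Suc m < N" "m < N" using jm m by auto
      hence "(if N \<le> j then cE1 (j + 1 - N) * cE1 (j - N) else 0)
       = (qbr q 1 (1 + int m) * qbr q lam1 (1-(int m+1))) * (qbr q 1 (int m) * qbr q lam1 (1-int m))"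
        by (simp add: jm cE1_def)
      moreover have "1 + int m = int m + 1" by simp
      ultimately show ?thesis by metis
    qed
    have B: "(if N < j then cE1 j * cE1 (j - N) else 0)
       = (qbr q 1 (int m) * qbr q (lam1 * inverse q) (1-int m)) * (qbr q 1 (int m) * qbr q lam1 (1-int m))"
    proof -
      have "N < j" "m < N" using jm m m1 by auto
      thus ?thesis by (simp add: jm cE1_def)
    qed
    have C: "(if N + 2 \<le> j then cE1 j * cE1 (j - 1) else 0)
       = (qbr q 1 (int m) * qbr q (lam1 * inverse q) (1-int m)) * (qbr q 1 (int m-1) * qbr q (lam1 * inverse q) (1-(int m-1)))"
    proof (cases "m = 1")
      case True thus ?thesis by (simp add: jm qbr10)
    next
      case False
      hence "N + 2 \<le> j" "j - 1 = N + (m - 1)" "\<not> N + m - Suc 0 < N" "\<not> N + m - 1 < N" "int (m - 1) = int m - 1"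
        using jm m1 by auto
      thus ?thesis by (simp add: jm cE1_def)
    qed
    show ?thesis unfolding A B C by (rule g)
  qed
qed

lemma rel_SE: "rA E1 * rA E1 * rA E2 - (q + inverse q) \<cdot>\<^sub>m (rA E1 * rA E2 * rA E1) + rA E2 * rA E1 * rA E1 = 0\<^sub>m d d"
proof -
  have a: "rA E1 * rA E1 * rA E2 = monr d d (\<lambda>j. j - (N + 1)) (\<lambda>j. if N \<le> j then cE1 (j + 1 - N) * cE1 (j - N) else 0)"
    unfolding rA_def gen.case monr_mult
    by (rule monr_cong) (auto simp: cE2_def)
  have b: "rA E1 * rA E2 * rA E1 = monr d d (\<lambda>j. j - (N + 1)) (\<lambda>j. if N < j then cE1 j * cE1 (j - N) else 0)"
    unfolding rA_def gen.case monr_mult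
    by (rule monr_cong) (auto simp: cE2_def)
  have c: "rA E2 * rA E1 * rA E1 = monr d d (\<lambda>j. j - (N + 1)) (\<lambda>j. if N + 2 \<le> j then cE1 j * cE1 (j - 1) else 0)"
    unfolding rA_def gen.case monr_mult
    by (rule monr_cong) (auto simp: cE2_def)
  show ?thesis unfolding a b c monr_smult monr_diff monr_add monr_zero[symmetric, of d d "\<lambda>j. j - (N + 1)"]
    apply (rule monr_cong)
     apply (rule coefSE, assumption)
    by simp
qed

lemma coefSF:
  "(if Suc (Suc j) < N then cF2 j else 0) - (q + inverse q) * (if Suc (Suc j) < N then cF2 (Suc j) else 0)
    + (if Suc (Suc j) < N then cF2 (Suc (Suc j)) else 0) = 0"
proof -
  have g: "qbr q lam2 (int j) - (q + inverse q) * qbr q lam2 (int j + 1) + qbr q lam2 (int j + 2) = 0"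
    by (rule G4[OF q0 lam2 qq1])
  show ?thesis
  proof (cases "Suc (Suc j) < N")
    case True thus ?thesis using g by (simp add: cF2_def algebra_simps)
  qed simp
qed

lemma rel_SF: "rA F1 * rA F1 * rA F2 - (q + inverse q) \<cdot>\<^sub>m (rA F1 * rA F2 * rA F1) + rA F2 * rA F1 * rA F1 = 0\<^sub>m d d"
proof -
  have a: "rA F1 * rA F1 * rA F2 = monr d d (\<lambda>j. j + N + 1) (\<lambda>j. if Suc (Suc j) < N then cF2 j else 0)"
    unfolding rA_def gen.case monr_mult
  proof (rule monr_cong)
    fix j assume "j < d"
    show "(if j + N - 1 < d then (if Suc (j + N - 1) < d then cF1 (Suc (j + N - 1)) * cF1 (j + N - 1) else 0) * cF2 j else 0)
      = (if Suc (Suc j) < N then cF2 j else 0)"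
      using cF2_0 N1 by (cases j) (auto simp: cF1_def cF2_def)
  qed (use N1 in auto)
  have b: "rA F1 * rA F2 * rA F1 = monr d d (\<lambda>j. j + N + 1) (\<lambda>j. if Suc (Suc j) < N then cF2 (Suc j) else 0)"
    unfolding rA_def gen.case monr_mult
    by (rule monr_cong) (use N1 in \<open>auto simp: cF1_def cF2_def\<close>)
  have c: "rA F2 * rA F1 * rA F1 = monr d d (\<lambda>j. j + N + 1) (\<lambda>j. if Suc (Suc j) < N then cF2 (Suc (Suc j)) else 0)"
    unfolding rA_def gen.case monr_mult
    by (rule monr_cong) (use N1 in \<open>auto simp: cF1_def cF2_def\<close>)
  show ?thesis unfolding a b c monr_smult monr_diff monr_add monr_zero[symmetric, of d d "\<lambda>j. j + N + 1"]
    apply (rule monr_cong)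
     apply (rule coefSF)
    by simp
qed

lemma is_rep_A: "is_rep q d rA"
  unfolding is_rep_def
  using rA_carrier rel_K1K1i rel_K1K2 rel_K1E1 rel_K2E1 rel_K1E2 rel_K2E2 rel_K1F1 rel_K2F1 rel_K1F2 rel_K2F2
    rel_E1F1 rel_E2F2 rel_E1F2 rel_E2F1 rel_E2E2 rel_F2F2 rel_SE rel_SF
  by (simp add: Let_def cartan_def qpow_def)

definition "\<iota>A = monr d N (\<lambda>j. j) (\<lambda>j. 1)"

lemma iotaA: "\<iota>A \<in> carrier_mat d N" by (simp add: \<iota>A_def)

lemma intertwA: "g \<in> gplus_gens \<Longrightarrow> rA g * \<iota>A = \<iota>A * typeA q N \<omega> lam2 g"
  unfolding gplus_gens_def
  using N1 by (auto simp: rA_def \<iota>A_def typeA_monr typeA_E1 monr_mult cK1_def cK2_def cE1_def cF1_def cE2_def iq_qpow qpow_def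
      intro!: monr_cong)


context
  assumes H2: "\<And>m. 0 < m \<Longrightarrow> m < N \<Longrightarrow> q ^ (2 * m) \<noteq> 1"
begin

lemma powdist: "a < N \<Longrightarrow> b < N \<Longrightarrow> q ^ a = q ^ b \<Longrightarrow> a = b"
proof -
  have *: "q ^ a \<noteq> q ^ b" if ab: "a < b" "b < N" for a b
  proof
    assume e: "q ^ a = q ^ b"
    have "q ^ b = q ^ a * q ^ (b - a)" using ab by (simp flip: power_add)
    hence "q ^ (b - a) = 1" using e q0 by simp
    moreover have "q ^ (2 * (b - a)) = (q ^ (b - a))^2" by (simp only: mult.commute[of 2 "b - a"] power_mult)
    ultimately have "q ^ (2 * (b - a)) = 1" by simp
    thus False using H2[of "b - a"] ab by simp
  qed
  assume "a < N" "b < N" "q ^ a = q ^ b"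
  thus "a = b" using *[of a b] *[of b a] by (cases a b rule: linorder_cases) auto
qed

lemma q_ne1: "q \<noteq> 1" using qq1 by auto

lemma distA: "i < d \<Longrightarrow> i' < d \<Longrightarrow> i \<noteq> i' \<Longrightarrow> cK1 i \<noteq> cK1 i' \<or> cK2 i \<noteq> cK2 i'"
proof (rule ccontr)
  assume i: "i < d" "i' < d" "i \<noteq> i'" and c: "\<not> (cK1 i \<noteq> cK1 i' \<or> cK2 i \<noteq> cK2 i')"
  define pos where "pos k = (if k < N then k else k - N + 1)" for k
  have p: "pos i < N" "pos i' < N" using i by (auto simp: pos_def)
  have k2: "cK2 k = lam2 * q ^ pos k" for k by (simp add: cK2_def pos_def)
  have "q ^ pos i = q ^ pos i'" using c lam2 by (simp add: k2)
  hence pe: "pos i = pos i'" using powdist p by blast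
  have iq0: "inverse q ^ k \<noteq> 0" for k using q0 by simp
  have key: False if "a < N" "\<not> b < N" "pos a = pos b" "cK1 a = cK1 b" for a b
  proof -
    have ab: "b - N = a - 1" "1 \<le> a" using that by (auto simp: pos_def)
    have eq0: "lam1 * inverse q ^ (2 * a) = lam1 * inverse q * inverse q ^ (2 * (a - 1))" using that ab by (simp add: cK1_def)
    have pw: "inverse q ^ (2 * a) = inverse q ^ (2 * (a - 1)) * inverse q * inverse q"
      using ab by (cases a) (auto simp: power2_eq_square)
    define X where "X = lam1 * inverse q ^ (2 * (a - 1)) * inverse q"
    have h1: "lam1 * inverse q ^ (2 * a) = X * inverse q" unfolding X_def pw by (simp only: ac_simps)
    have h2: "lam1 * inverse q * inverse q ^ (2 * (a - 1)) = X * 1" unfolding X_def by (simp only: ac_simps mult_1_right mult_1_left)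
    have "X * inverse q = X * 1" unfolding h1[symmetric] h2[symmetric] by (rule eq0)
    moreover have "X \<noteq> 0" unfolding X_def using lam1_0 iq0 q0 by simp
    ultimately have "inverse q = 1" by (simp only: mult_cancel_left) simp
    hence "q = 1" by (simp add: inverse_eq_iff_eq)
    thus False using q_ne1 by simp
  qed
  have "(i < N \<and> \<not> i' < N) \<or> (\<not> i < N \<and> i' < N)" using pe i(3) by (auto simp: pos_def split: if_splits)
  thus False using key[of i i'] key[of i' i] pe c by auto
qed

lemma nzE1v: "1 \<le> p \<Longrightarrow> p < N \<Longrightarrow> cE1 p \<noteq> 0"
proof -
  assume p: "1 \<le> p" "p < N"
  have a: "qbr q 1 (int p) \<noteq> 0"
  proof
    assume "qbr q 1 (int p) = 0"
    hence "(q ^ p)^2 = 1" using qbr_zero_iff[OF q0 _ qq1, of 1] by simp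
    moreover have "q ^ (2 * p) = (q ^ p)^2" by (simp only: mult.commute[of 2] power_mult)
    ultimately show False using H2[of p] p by simp
  qed
  have b: "qbr q lam1 (1 - int p) \<noteq> 0"
  proof
    assume "qbr q lam1 (1 - int p) = 0"
    hence z: "(q powi (1 - int p) * lam1)^2 = 1" using qbr_zero_iff[OF q0 lam1_0 qq1] by simp
    have e: "q powi (1 - int p) * q ^ (N - 1) = q ^ (N - p)" by (rule powi_comb[OF q0]) (use p in simp)
    have "(q powi (1 - int p) * lam1)^2 = \<omega>^2 * (q powi (1 - int p) * q ^ (N - 1))^2"
      by (simp add: algebra_simps power2_eq_square)
    also have "\<dots> = (q ^ (N - p))^2" using om e by auto
    finally have "(q ^ (N - p))^2 = 1" using z by simp
    moreover have "q ^ (2 * (N - p)) = (q ^ (N - p))^2" by (simp only: mult.commute[of 2] power_mult)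
    ultimately have "q ^ (2 * (N - p)) = 1" by simp
    moreover have "0 < N - p" "N - p < N" using p by auto
    ultimately show False using H2[of "N - p"] by blast
  qed
  show ?thesis using a b p by (simp add: cE1_def)
qed

lemma nzE1y: "1 \<le> m \<Longrightarrow> Suc m < N \<Longrightarrow> cE1 (N + m) \<noteq> 0"
proof -
  assume m: "1 \<le> m" "Suc m < N"
  have a: "qbr q 1 (int m) \<noteq> 0"
  proof
    assume "qbr q 1 (int m) = 0"
    hence "(q ^ m)^2 = 1" using qbr_zero_iff[OF q0 _ qq1, of 1] by simp
    moreover have "q ^ (2 * m) = (q ^ m)^2" by (simp only: mult.commute[of 2] power_mult)
    ultimately show False using H2[of m] m by simp
  qed
  have b: "qbr q (lam1 * inverse q) (1 - int m) \<noteq> 0"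
  proof
    assume "qbr q (lam1 * inverse q) (1 - int m) = 0"
    hence "qbr q lam1 (- int m) = 0" using qbr_shift2[OF q0, of lam1 "1 - int m"] by simp
    hence z: "(q powi (- int m) * lam1)^2 = 1" using qbr_zero_iff[OF q0 lam1_0 qq1] by simp
    have e: "q powi (- int m) * q ^ (N - 1) = q ^ (N - 1 - m)" by (rule powi_comb[OF q0]) (use m in simp)
    have "(q powi (- int m) * lam1)^2 = \<omega>^2 * (q powi (- int m) * q ^ (N - 1))^2"
      by (simp add: algebra_simps power2_eq_square)
    also have "\<dots> = (q ^ (N - 1 - m))^2" using om e by auto
    finally have "(q ^ (N - 1 - m))^2 = 1" using z by simp
    moreover have "q ^ (2 * (N - 1 - m)) = (q ^ (N - 1 - m))^2" by (simp only: mult.commute[of 2] power_mult)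
    ultimately have "q ^ (2 * (N - 1 - m)) = 1" by simp
    moreover have "0 < N - 1 - m" "N - 1 - m < N" using m by auto
    ultimately show False using H2[of "N - 1 - m"] by blast
  qed
  show ?thesis using a b m by (simp add: cE1_def)
qed

lemma nzF2: "1 \<le> p \<Longrightarrow> p < N \<Longrightarrow> cF2 p \<noteq> 0"
proof
  assume p: "1 \<le> p" "p < N" and z: "cF2 p = 0"
  hence "qbr q lam2 (int p) = 0" by (simp add: cF2_def)
  hence a: "(q ^ p * lam2)^2 = 1" using qbr_zero_iff[OF q0 lam2 qq1] by simp
  have b: "lam2^2 = 1" using van0 qbr_zero_iff[OF q0 lam2 qq1, of 0] by simp
  have "(q ^ p)^2 = 1" using a b by (simp add: power_mult_distrib)
  moreover have "q ^ (2 * p) = (q ^ p)^2" by (simp only: mult.commute[of 2] power_mult)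
  ultimately show False using H2[of p] p by simp
qed

lemma simpleA: "simple_module d rA"
  unfolding simple_module_def
proof (intro conjI allI impI)
  show "0 < d" using N1 by simp
  fix W assume sub: "submodule d rA W"
  show "W = {0\<^sub>v d} \<or> W = carrier_vec d"
  proof (cases "\<exists>w\<in>W. w \<noteq> 0\<^sub>v d")
    case False
    hence "W = {0\<^sub>v d}" using sub by (auto simp: submodule_def)
    thus ?thesis ..
  next
    case True
    then obtain w where w: "w \<in> W" "w \<noteq> 0\<^sub>v d" by blast
    have K1: "rA K1 = monr d d id cK1" and K2: "rA K2 = monr d d id cK2" by (simp_all add: rA_def)
    obtain i where i: "i < d" "unit_vec d i \<in> W"
      using sub_sep[OF sub K1 K2 distA w] by blast
    have F2: "rA F2 = monr d d (\<lambda>i. i + N - 1) cF2" and E1: "rA E1 = monr d d (\<lambda>i. i - 1) cE1"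
      and F1: "rA F1 = monr d d Suc cF1" and E2: "rA E2 = monr d d (\<lambda>i. i + 1 - N) cE2"
      by (simp_all add: rA_def)
    obtain p0 where p0: "p0 < N" "unit_vec d p0 \<in> W"
    proof (cases "i < N")
      case True thus ?thesis using that i by blast
    next
      case False
      define m0 where "m0 = i - N"
      have im: "i = N + m0" "Suc m0 < N" using False i by (auto simp: m0_def)
      have down: "unit_vec d (N + (m0 - k)) \<in> W" for k
      proof (induction k)
        case 0 thus ?case using i im by simp
      next
        case (Suc k)
        show ?case
        proof (cases "m0 - k = 0")
          case True thus ?thesis using Suc by simp
        next
          case False
          have "unit_vec d ((\<lambda>i. i - 1) (N + (m0 - k))) \<in> W"
            by (rule sub_step[OF sub Suc E1]) (use im False nzE1y[of "m0 - k"] in auto)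
          moreover have "N + (m0 - k) - 1 = N + (m0 - Suc k)" using False by simp
          ultimately show ?thesis by simp
        qed
      qed
      have yN: "unit_vec d N \<in> W" using down[of m0] by simp
      have "unit_vec d ((\<lambda>i. i + 1 - N) N) \<in> W"
        by (rule sub_step[OF sub yN E2]) (use im in \<open>auto simp: cE2_def\<close>)
      hence "unit_vec d 1 \<in> W" by simp
      thus ?thesis using that[of 1] im by simp
    qed
    have v0: "unit_vec d 0 \<in> W"
    proof -
      have down: "unit_vec d (p0 - k) \<in> W" for k
      proof (induction k)
        case 0 thus ?case using p0 by simp
      next
        case (Suc k)
        show ?case
        proof (cases "p0 - k = 0")
          case True thus ?thesis using Suc by simp
        next
          case False
          have "unit_vec d ((\<lambda>i. i - 1) (p0 - k)) \<in> W"
            by (rule sub_step[OF sub Suc E1]) (use p0 False nzE1v[of "p0 - k"] in auto)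
          moreover have "p0 - k - 1 = p0 - Suc k" by simp
          ultimately show ?thesis by simp
        qed
      qed
      show ?thesis using down[of p0] by simp
    qed
    have up: "p < N \<Longrightarrow> unit_vec d p \<in> W" for p
    proof (induction p)
      case 0 thus ?case using v0 by simp
    next
      case (Suc p)
      have "unit_vec d (Suc p) \<in> W"
        by (rule sub_step[OF sub _ F1]) (use Suc in \<open>auto simp: cF1_def\<close>)
      thus ?case by simp
    qed
    have y: "1 \<le> p \<Longrightarrow> p < N \<Longrightarrow> unit_vec d (p + N - 1) \<in> W" for p
    proof -
      assume p: "1 \<le> p" "p < N"
      have "unit_vec d ((\<lambda>i. i + N - 1) p) \<in> W"
        by (rule sub_step[OF sub up[of p] F2]) (use p nzF2[of p] in auto)
      thus ?thesis by simp
    qed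
    have "W = carrier_vec d"
    proof (rule sub_all[OF sub])
      fix k assume k: "k < d"
      show "unit_vec d k \<in> W"
      proof (cases "k < N")
        case True thus ?thesis by (rule up)
      next
        case False
        hence "k = (k - N + 1) + N - 1" "1 \<le> k - N + 1" "k - N + 1 < N" using k by auto
        thus ?thesis using y[of "k - N + 1"] by simp
      qed
    qed
    thus ?thesis ..
  qed
qed

end

end



lemma mv_zero: "T \<in> carrier_mat m n \<Longrightarrow> T *\<^sub>v 0\<^sub>v n = 0\<^sub>v m"
  by (rule eq_vecI) auto

lemma smult_zero_vec': "c \<cdot>\<^sub>v 0\<^sub>v n = (0\<^sub>v n :: complex vec)"
  by (rule eq_vecI) auto

lemma image_sub:
  assumes sub: "submodule d r W" and T: "intertwiner d r dM rM T"
    and cr: "\<And>g. r g \<in> carrier_mat d d" and crM: "\<And>g. rM g \<in> carrier_mat dM dM"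
  shows "submodule dM rM ((\<lambda>v. T *\<^sub>v v) ` W)"
proof -
  have Tc: "T \<in> carrier_mat dM d" using T by (simp add: intertwiner_def)
  have Wc: "W \<subseteq> carrier_vec d" using sub by (simp add: submodule_def)
  show ?thesis unfolding submodule_def
  proof (intro conjI ballI allI)
    show "(\<lambda>v. T *\<^sub>v v) ` W \<subseteq> carrier_vec dM" using Wc Tc by auto
    have "0\<^sub>v d \<in> W" using sub by (simp add: submodule_def)
    moreover have "T *\<^sub>v 0\<^sub>v d = 0\<^sub>v dM" using Tc by (rule mv_zero)
    ultimately show "0\<^sub>v dM \<in> (\<lambda>v. T *\<^sub>v v) ` W" by (metis rev_image_eqI)
  next
    fix u v assume "u \<in> (\<lambda>v. T *\<^sub>v v) ` W" "v \<in> (\<lambda>v. T *\<^sub>v v) ` W"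
    then obtain a b where ab: "a \<in> W" "b \<in> W" "u = T *\<^sub>v a" "v = T *\<^sub>v b" by auto
    have "a + b \<in> W" using sub ab by (simp add: submodule_def)
    moreover have "T *\<^sub>v (a + b) = u + v" using ab Wc Tc by (simp add: mult_add_distrib_mat_vec subsetD)
    ultimately show "u + v \<in> (\<lambda>v. T *\<^sub>v v) ` W" by (metis rev_image_eqI)
  next
    fix c u assume "u \<in> (\<lambda>v. T *\<^sub>v v) ` W"
    then obtain a where a: "a \<in> W" "u = T *\<^sub>v a" by auto
    have "c \<cdot>\<^sub>v a \<in> W" using sub a by (simp add: submodule_def)
    moreover have "T *\<^sub>v (c \<cdot>\<^sub>v a) = c \<cdot>\<^sub>v u" using a Wc Tc by (simp add: mult_mat_vec subsetD)
    ultimately show "c \<cdot>\<^sub>v u \<in> (\<lambda>v. T *\<^sub>v v) ` W" by (metis rev_image_eqI)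
  next
    fix g u assume "u \<in> (\<lambda>v. T *\<^sub>v v) ` W"
    then obtain a where a: "a \<in> W" "u = T *\<^sub>v a" by auto
    have ac: "a \<in> carrier_vec d" using a Wc by auto
    have "r g *\<^sub>v a \<in> W" using sub a by (simp add: submodule_def)
    moreover have "T *\<^sub>v (r g *\<^sub>v a) = rM g *\<^sub>v u"
    proof -
      have "T *\<^sub>v (r g *\<^sub>v a) = (T * r g) *\<^sub>v a" using Tc cr[of g] ac by simp
      also have "T * r g = rM g * T" using T by (simp add: intertwiner_def)
      also have "(rM g * T) *\<^sub>v a = rM g *\<^sub>v u" using Tc crM[of g] ac a by simp
      finally show ?thesis .
    qed
    ultimately show "rM g *\<^sub>v u \<in> (\<lambda>v. T *\<^sub>v v) ` W" by (metis rev_image_eqI)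
  qed
qed

lemma kernel_sub:
  assumes T: "intertwiner d r dM rM T"
    and cr: "\<And>g. r g \<in> carrier_mat d d" and crM: "\<And>g. rM g \<in> carrier_mat dM dM"
  shows "submodule d r {v \<in> carrier_vec d. T *\<^sub>v v = 0\<^sub>v dM}"
proof -
  have Tc: "T \<in> carrier_mat dM d" using T by (simp add: intertwiner_def)
  show ?thesis unfolding submodule_def
  proof (intro conjI ballI allI)
    show "{v \<in> carrier_vec d. T *\<^sub>v v = 0\<^sub>v dM} \<subseteq> carrier_vec d" by auto
    show "0\<^sub>v d \<in> {v \<in> carrier_vec d. T *\<^sub>v v = 0\<^sub>v dM}" using mv_zero[OF Tc] by simp
  next
    fix u v assume "u \<in> {v \<in> carrier_vec d. T *\<^sub>v v = 0\<^sub>v dM}" "v \<in> {v \<in> carrier_vec d. T *\<^sub>v v = 0\<^sub>v dM}"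
    thus "u + v \<in> {v \<in> carrier_vec d. T *\<^sub>v v = 0\<^sub>v dM}" using Tc by (simp add: mult_add_distrib_mat_vec)
  next
    fix c u assume "u \<in> {v \<in> carrier_vec d. T *\<^sub>v v = 0\<^sub>v dM}"
    thus "c \<cdot>\<^sub>v u \<in> {v \<in> carrier_vec d. T *\<^sub>v v = 0\<^sub>v dM}" using Tc by (simp add: mult_mat_vec smult_zero_vec')
  next
    fix g u assume u: "u \<in> {v \<in> carrier_vec d. T *\<^sub>v v = 0\<^sub>v dM}"
    have "T *\<^sub>v (r g *\<^sub>v u) = (T * r g) *\<^sub>v u" using Tc cr[of g] u by simp
    also have "T * r g = rM g * T" using T by (simp add: intertwiner_def)
    also have "(rM g * T) *\<^sub>v u = 0\<^sub>v dM" using Tc crM[of g] u mv_zero[OF crM[of g]] by simp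
    moreover have "r g *\<^sub>v u \<in> carrier_vec d" using cr[of g] u by simp
    ultimately show "r g *\<^sub>v u \<in> {v \<in> carrier_vec d. T *\<^sub>v v = 0\<^sub>v dM}" by simp
  qed
qed

lemma sub_carrier: assumes "\<And>g. r g \<in> carrier_mat d d" shows "submodule d r (carrier_vec d)"
proof -
  have "\<forall>g. \<forall>u\<in>carrier_vec d. r g *\<^sub>v u \<in> carrier_vec d" using assms by (metis mult_mat_vec_carrier)
  thus ?thesis by (auto simp: submodule_def)
qed

lemma generic_quot:
  assumes ind: "induced_module q \<sigma> N d r \<iota>"
    and rep: "is_rep q dM rM" and simp: "simple_module dM rM"
    and iM: "\<iota>M \<in> carrier_mat dM N" and inter: "\<forall>g\<in>gplus_gens. rM g * \<iota>M = \<iota>M * \<sigma> g"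
    and N: "0 < N" and nz: "\<iota>M *\<^sub>v unit_vec N 0 \<noteq> 0\<^sub>v dM"
  shows "\<exists>\<pi>. intertwiner d r dM rM \<pi> \<and> (\<lambda>v. \<pi> *\<^sub>v v) ` carrier_vec d = carrier_vec dM \<and>
     maximal_proper_submodule d r {v \<in> carrier_vec d. \<pi> *\<^sub>v v = 0\<^sub>v dM}"
proof -
  have repd: "is_rep q d r" and ic: "\<iota> \<in> carrier_mat d N" using ind by (auto simp: induced_module_def)
  have cr: "\<And>g. r g \<in> carrier_mat d d" using repd by (simp add: is_rep_def)
  have crM: "\<And>g. rM g \<in> carrier_mat dM dM" using rep by (simp add: is_rep_def)
  obtain T where T: "intertwiner d r dM rM T" "T * \<iota> = \<iota>M"
    using ind rep iM inter unfolding induced_module_def by metis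
  have Tc: "T \<in> carrier_mat dM d" using T by (simp add: intertwiner_def)
  define S where "S = (\<lambda>v. T *\<^sub>v v) ` carrier_vec d"
  have subS: "submodule dM rM S" unfolding S_def by (rule image_sub[OF sub_carrier[OF cr] T(1) cr crM])
  have e0: "unit_vec N 0 \<in> carrier_vec N" by simp
  have "T *\<^sub>v (\<iota> *\<^sub>v unit_vec N 0) = \<iota>M *\<^sub>v unit_vec N 0"
    using Tc ic e0 T(2) by (simp flip: assoc_mult_mat_vec)
  moreover have "\<iota> *\<^sub>v unit_vec N 0 \<in> carrier_vec d" using ic by simp
  ultimately have "\<iota>M *\<^sub>v unit_vec N 0 \<in> S" unfolding S_def by (metis rev_image_eqI)
  hence "S \<noteq> {0\<^sub>v dM}" using nz by auto
  hence Sfull: "S = carrier_vec dM" using simp subS by (auto simp: simple_module_def)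
  have dM0: "0 < dM" using simp by (simp add: simple_module_def)
  define K where "K = {v \<in> carrier_vec d. T *\<^sub>v v = 0\<^sub>v dM}"
  have subK: "submodule d r K" unfolding K_def by (rule kernel_sub[OF T(1) cr crM])
  have Kne: "K \<noteq> carrier_vec d"
  proof
    assume a: "K = carrier_vec d"
    have "unit_vec dM 0 \<in> S" using Sfull dM0 by simp
    then obtain v where v: "v \<in> carrier_vec d" "unit_vec dM 0 = T *\<^sub>v v" unfolding S_def by auto
    have "v \<in> K" using a v by simp
    hence tv: "T *\<^sub>v v = 0\<^sub>v dM" by (simp add: K_def)
    have "(unit_vec dM 0 :: complex vec) = 0\<^sub>v dM" using v(2) tv by (rule trans)
    hence "(unit_vec dM 0 :: complex vec) $ 0 = (0\<^sub>v dM :: complex vec) $ 0" by simp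
    thus False using dM0 by simp
  qed
  have maxK: "maximal_proper_submodule d r K"
    unfolding maximal_proper_submodule_def
  proof (intro conjI allI impI subK Kne)
    fix W' assume W': "submodule d r W' \<and> K \<subseteq> W'"
    have subS': "submodule dM rM ((\<lambda>v. T *\<^sub>v v) ` W')" by (rule image_sub[OF conjunct1[OF W'] T(1) cr crM])
    have W'c: "W' \<subseteq> carrier_vec d" using W' by (simp add: submodule_def)
    show "W' = K \<or> W' = carrier_vec d"
    proof (cases "(\<lambda>v. T *\<^sub>v v) ` W' = {0\<^sub>v dM}")
      case True
      hence "W' \<subseteq> K" using W'c unfolding K_def by auto
      thus ?thesis using W' by auto
    next
      case False
      hence full: "(\<lambda>v. T *\<^sub>v v) ` W' = carrier_vec dM" using simp subS' by (auto simp: simple_module_def)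
      have "carrier_vec d \<subseteq> W'"
      proof
        fix v :: "complex vec" assume v: "v \<in> carrier_vec d"
        have "T *\<^sub>v v \<in> carrier_vec dM" using Tc v by simp
        then obtain w where w: "w \<in> W'" "T *\<^sub>v v = T *\<^sub>v w" using full by (metis imageE)
        have wc: "w \<in> carrier_vec d" using w W'c by auto
        define u where "u = v + (-1) \<cdot>\<^sub>v w"
        have uc: "u \<in> carrier_vec d" using v wc by (simp add: u_def)
        have "T *\<^sub>v u = T *\<^sub>v v + (-1) \<cdot>\<^sub>v (T *\<^sub>v w)" using Tc v wc by (simp add: u_def mult_add_distrib_mat_vec mult_mat_vec)
        also have "\<dots> = 0\<^sub>v dM" using w(2) Tc wc by (intro eq_vecI) auto
        finally have "u \<in> K" using uc by (simp add: K_def)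
        hence uW: "u \<in> W'" using W' by auto
        have "(-1) \<cdot>\<^sub>v w \<in> W'" using W' w by (simp add: submodule_def)
        hence "u + (-1) \<cdot>\<^sub>v ((-1) \<cdot>\<^sub>v w) \<in> W'" using W' uW by (simp add: submodule_def)
        moreover have "u + (-1) \<cdot>\<^sub>v ((-1) \<cdot>\<^sub>v w) = v" using v wc by (intro eq_vecI) (auto simp: u_def)
        ultimately show "v \<in> W'" by simp
      qed
      thus ?thesis using W'c by auto
    qed
  qed
  show ?thesis using T(1) Sfull maxK unfolding S_def K_def by blast
qed


theorem mainTheorem6:
  fixes q \<omega> lam2 :: complex and N d :: nat and r :: "gen \<Rightarrow> complex mat" and \<iota> :: "complex mat"
  assumes root: "\<exists>n>0. q ^ n = 1" and q2: "q ^ 2 \<noteq> 1"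
    and N: "1 \<le> N" "N \<le> lprime q"
    and om: "\<omega> = 1 \<or> \<omega> = -1" and lam2: "lam2 \<noteq> 0"
    and ind: "induced_module q (typeA q N \<omega> lam2) N d r \<iota>"
    and cond: "qbr q lam2 0 * qbr q lam2 (int N) = 0"
  shows "\<exists>W. maximal_proper_submodule d r W \<and>
           (\<exists>dM rM \<pi>. is_rep q dM rM \<and> simple_module dM rM \<and>
              intertwiner d r dM rM \<pi> \<and>
              (\<lambda>v. \<pi> *\<^sub>v v) ` carrier_vec d = carrier_vec dM \<and>
              {v \<in> carrier_vec d. \<pi> *\<^sub>v v = 0\<^sub>v dM} = W \<and>
              (qbr q lam2 0 = 0 \<and> qbr q lam2 (int N) \<noteq> 0 \<longrightarrow> dM = 2 * N - 1) \<and>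
              (qbr q lam2 0 \<noteq> 0 \<and> qbr q lam2 (int N) = 0 \<longrightarrow> dM = 2 * N + 1) \<and>
              (qbr q lam2 0 = 0 \<and> qbr q lam2 (int N) = 0 \<longrightarrow>
                 N = lprime q \<and> dM = 2 * lprime q - 1))"
  proof -
  have q0: "q \<noteq> 0" using root by (rule q_nz)
  have qq1: "q * q \<noteq> 1" using q2 by (simp add: power2_eq_square)
  have N0: "0 < N" using N by simp
  have z0: "qbr q lam2 0 = 0 \<longleftrightarrow> lam2^2 = 1" using qbr_zero_iff[OF q0 lam2 qq1, of 0] by simp
  have zN: "qbr q lam2 (int N) = 0 \<longleftrightarrow> (q ^ N * lam2)^2 = 1" using qbr_zero_iff[OF q0 lam2 qq1, of "int N"] by simp
  have sq: "q ^ (2 * m) = (q ^ m)^2" for m by (simp only: mult.commute[of 2] power_mult)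
  show ?thesis
  proof (cases "qbr q lam2 0 = 0")
    case True
    interpret A: setA q \<omega> lam2 N using q0 qq1 om lam2 N(1) True by unfold_locales auto
    have H: "\<And>m. 0 < m \<Longrightarrow> m < N \<Longrightarrow> q ^ (2 * m) \<noteq> 1"
      using lprime_le[OF root] N(2) by (meson leD less_le_trans)
    have nz: "A.\<iota>A *\<^sub>v unit_vec N 0 \<noteq> 0\<^sub>v (2 * N - 1)"
    proof
      assume a: "A.\<iota>A *\<^sub>v unit_vec N 0 = 0\<^sub>v (2 * N - 1)"
      have "A.\<iota>A *\<^sub>v unit_vec N 0 = 1 \<cdot>\<^sub>v unit_vec (2 * N - 1) 0"
        unfolding A.\<iota>A_def using N0 by (subst monr_unit) auto
      hence "(1 \<cdot>\<^sub>v unit_vec (2 * N - 1) 0 :: complex vec) $ 0 = (0\<^sub>v (2 * N - 1) :: complex vec) $ 0" using a by simp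
      thus False using N0 by simp
    qed
    obtain \<pi> where \<pi>: "intertwiner d r (2 * N - 1) A.rA \<pi>"
      "(\<lambda>v. \<pi> *\<^sub>v v) ` carrier_vec d = carrier_vec (2 * N - 1)"
      "maximal_proper_submodule d r {v \<in> carrier_vec d. \<pi> *\<^sub>v v = 0\<^sub>v (2 * N - 1)}"
      using generic_quot[OF ind A.is_rep_A A.simpleA[OF H] A.iotaA _ N0 nz] A.intertwA by blast
    have iii: "qbr q lam2 (int N) = 0 \<Longrightarrow> N = lprime q"
    proof -
      assume "qbr q lam2 (int N) = 0"
      hence "(q ^ N * lam2)^2 = 1" using zN by simp
      moreover have "lam2^2 = 1" using True z0 by simp
      ultimately have "(q ^ N)^2 = 1" by (simp add: power_mult_distrib)
      hence "q ^ (2 * N) = 1" using sq by simp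
      hence "lprime q \<le> N" using lprime_le[OF root N0] by simp
      thus "N = lprime q" using N(2) by simp
    qed
    show ?thesis
      apply (rule exI[of _ "{v \<in> carrier_vec d. \<pi> *\<^sub>v v = 0\<^sub>v (2 * N - 1)}"])
      apply (rule conjI[OF \<pi>(3)])
      apply (rule exI[of _ "2 * N - 1"], rule exI[of _ A.rA], rule exI[of _ \<pi>])
      using A.is_rep_A A.simpleA[OF H] \<pi>(1,2) True iii by auto
  next
    case False
    hence vanN: "qbr q lam2 (int N) = 0" using cond by simp
    interpret B: setB q \<omega> lam2 N using q0 qq1 om lam2 N(1) vanN by unfold_locales auto
    have Nlt: "N < lprime q"
    proof (rule ccontr)
      assume "\<not> N < lprime q"
      hence NL: "N = lprime q" using N(2) by simp
      have "(q ^ N)^2 = 1" using lprime_pow[OF root] sq NL by simp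
      moreover have "(q ^ N * lam2)^2 = 1" using vanN zN by simp
      ultimately have "lam2^2 = 1" by (simp add: power_mult_distrib)
      thus False using False z0 by simp
    qed
    have H: "\<And>m. 0 < m \<Longrightarrow> m \<le> N \<Longrightarrow> q ^ (2 * m) \<noteq> 1"
      using lprime_le[OF root] Nlt by (meson leD le_less_trans)
    have nz: "B.\<iota>B *\<^sub>v unit_vec N 0 \<noteq> 0\<^sub>v (2 * N + 1)"
    proof
      assume a: "B.\<iota>B *\<^sub>v unit_vec N 0 = 0\<^sub>v (2 * N + 1)"
      have "B.\<iota>B *\<^sub>v unit_vec N 0 = 1 \<cdot>\<^sub>v unit_vec (2 * N + 1) 0"
        unfolding B.\<iota>B_def using N0 by (subst monr_unit) auto
      hence "(1 \<cdot>\<^sub>v unit_vec (2 * N + 1) 0 :: complex vec) $ 0 = (0\<^sub>v (2 * N + 1) :: complex vec) $ 0" using a by simp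
      thus False by simp
    qed
    obtain \<pi> where \<pi>: "intertwiner d r (2 * N + 1) B.rB \<pi>"
      "(\<lambda>v. \<pi> *\<^sub>v v) ` carrier_vec d = carrier_vec (2 * N + 1)"
      "maximal_proper_submodule d r {v \<in> carrier_vec d. \<pi> *\<^sub>v v = 0\<^sub>v (2 * N + 1)}"
      using generic_quot[OF ind B.is_rep_B B.simpleB[OF H] B.iotaB _ N0 nz] B.intertwB by blast
    show ?thesis
      apply (rule exI[of _ "{v \<in> carrier_vec d. \<pi> *\<^sub>v v = 0\<^sub>v (2 * N + 1)}"])
      apply (rule conjI[OF \<pi>(3)])
      apply (rule exI[of _ "2 * N + 1"], rule exI[of _ B.rB], rule exI[of _ \<pi>])
      using B.is_rep_B B.simpleB[OF H] \<pi>(1,2) False vanN by auto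
  qed
qed

end
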